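(* Let $C$ be a basic $k$-coalgebra and $A,B$ subcoalgebras of $C$. (a) A complete set of pairwise non-isomorphic simple right $A\wedge^C B$-comodules is the union of a complete set of simple right $A$-comodules and a complete set of simple right $B$-comodules; i.e. every simple subcoalgebra of $A\wedge^C B$ lies in $A$ or in $B$. (b) For simple subcoalgebras $S,T$ of $A\wedge^C B$: $S\wedge^{A\wedge^C B}T=S\oplus T$ if $S\not\subseteq A$ and $T\not\subseteq B$; $S\wedge^{A\wedge^C B}T=S\wedge^C T$ if $S\subseteq A$ and $T\subseteq B$; $S\wedge^{A\wedge^C B}T=S\wedge^A T$ if $S\subseteq A$ and $T\not\subseteq B$; $S\wedge^{A\wedge^C B}T=S\wedge^B T$ if $S\not\subseteq A$ and $T\subseteq B$. *)

theory Defs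
  imports Main
begin

text \<open>A k-coalgebra is presented via a (Hamel) basis indexed by a type 'b:
  elements are finitely supported functions 'b => 'k; the tensor square is
  represented by finitely supported functions on 'b * 'b.  The comultiplication
  is given by structure constants c i j l  (Delta e_i = sum c i j l e_j (x) e_l),
  the counit by u i = eps e_i.\<close>

definition fsupp :: "('i \<Rightarrow> 'k::zero) \<Rightarrow> bool" where
  "fsupp f \<longleftrightarrow> finite {i. f i \<noteq> 0}"

definition Cset :: "('b \<Rightarrow> 'k::zero) set" where
  "Cset = {x. fsupp x}"

definition zerov :: "'i \<Rightarrow> 'k::zero" where
  "zerov = (\<lambda>_. 0)"

definition lin_subspace :: "('i \<Rightarrow> 'k::field) set \<Rightarrow> bool" where
  "lin_subspace V \<longleftrightarrow> zerov \<in> V \<and> (\<forall>x\<in>V. \<forall>y\<in>V. (\<lambda>i. x i + y i) \<in> V)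
     \<and> (\<forall>a. \<forall>x\<in>V. (\<lambda>i. a * x i) \<in> V)"

definition lin_span :: "('i \<Rightarrow> 'k::field) set \<Rightarrow> ('i \<Rightarrow> 'k) set" where
  "lin_span S = \<Inter>{V. lin_subspace V \<and> S \<subseteq> V}"

definition ssum :: "('i \<Rightarrow> 'k::field) set \<Rightarrow> ('i \<Rightarrow> 'k) set \<Rightarrow> ('i \<Rightarrow> 'k) set" where
  "ssum X Y = {(\<lambda>i. x i + y i) | x y. x \<in> X \<and> y \<in> Y}"

definition tens :: "('b \<Rightarrow> 'k::field) set \<Rightarrow> ('b \<Rightarrow> 'k) set \<Rightarrow> ('b \<times> 'b \<Rightarrow> 'k) set" where
  "tens X Y = lin_span {(\<lambda>(j, l). x j * y l) | x y. x \<in> X \<and> y \<in> Y}"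

definition row :: "('b \<Rightarrow> 'b \<Rightarrow> 'b \<Rightarrow> 'k::zero) \<Rightarrow> 'b \<Rightarrow> 'b set" where
  "row c i = {m. \<exists>j. c i m j \<noteq> 0 \<or> c i j m \<noteq> 0}"

definition coalg :: "('b \<Rightarrow> 'b \<Rightarrow> 'b \<Rightarrow> 'k::field) \<Rightarrow> ('b \<Rightarrow> 'k) \<Rightarrow> bool" where
  "coalg c u \<longleftrightarrow>
     (\<forall>i. finite (row c i)) \<and>
     (\<forall>i j k l. (\<Sum>m\<in>row c i. c i m l * c m j k) = (\<Sum>m\<in>row c i. c i j m * c m k l)) \<and>
     (\<forall>i l. (\<Sum>j\<in>row c i. u j * c i j l) = (if l = i then 1 else 0)) \<and>
     (\<forall>i j. (\<Sum>l\<in>row c i. c i j l * u l) = (if j = i then 1 else 0))"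

definition delta :: "('b \<Rightarrow> 'b \<Rightarrow> 'b \<Rightarrow> 'k::field) \<Rightarrow> ('b \<Rightarrow> 'k) \<Rightarrow> ('b \<times> 'b \<Rightarrow> 'k)" where
  "delta c x = (\<lambda>(j, l). \<Sum>i\<in>{i. x i \<noteq> 0}. x i * c i j l)"

definition subcoalg :: "('b \<Rightarrow> 'b \<Rightarrow> 'b \<Rightarrow> 'k::field) \<Rightarrow> ('b \<Rightarrow> 'k) set \<Rightarrow> bool" where
  "subcoalg c D \<longleftrightarrow> lin_subspace D \<and> D \<subseteq> Cset \<and> (\<forall>x\<in>D. delta c x \<in> tens D D)"

text \<open>wedge of X and Y inside the subcoalgebra D (D = Cset gives the wedge in C):
  {x in D. Delta x in X (x) D + D (x) Y}\<close>
definition wedge :: "('b \<Rightarrow> 'b \<Rightarrow> 'b \<Rightarrow> 'k::field) \<Rightarrow> ('b \<Rightarrow> 'k) set \<Rightarrow> ('b \<Rightarrow> 'k) set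
    \<Rightarrow> ('b \<Rightarrow> 'k) set \<Rightarrow> ('b \<Rightarrow> 'k) set" where
  "wedge c D X Y = {x \<in> D. delta c x \<in> ssum (tens X D) (tens D Y)}"

definition simple_subcoalg :: "('b \<Rightarrow> 'b \<Rightarrow> 'b \<Rightarrow> 'k::field) \<Rightarrow> ('b \<Rightarrow> 'k) set \<Rightarrow> bool" where
  "simple_subcoalg c S \<longleftrightarrow> subcoalg c S \<and> S \<noteq> {zerov} \<and>
     (\<forall>T. subcoalg c T \<and> T \<subseteq> S \<longrightarrow> T = {zerov} \<or> T = S)"

text \<open>basic: each simple subcoalgebra S is simple as a right S-comodule
  (i.e. has no nonzero proper right coideal), equivalently soc(C_C) is a direct
  sum of pairwise non-isomorphic simple comodules.\<close>
definition basic :: "('b \<Rightarrow> 'b \<Rightarrow> 'b \<Rightarrow> 'k::field) \<Rightarrow> bool" where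
  "basic c \<longleftrightarrow> (\<forall>S. simple_subcoalg c S \<longrightarrow>
     (\<forall>V. lin_subspace V \<and> V \<subseteq> S \<and> (\<forall>x\<in>V. delta c x \<in> tens V Cset) \<longrightarrow> V = {zerov} \<or> V = S))"

end

theory Submission
  imports Defs "HOL.Vector_Spaces" "HOL-Library.Function_Algebras"
begin

definition sc :: "'k::field \<Rightarrow> ('b \<Rightarrow> 'k) \<Rightarrow> ('b \<Rightarrow> 'k)" where
  "sc a f = (\<lambda>i. a * f i)"

lemma vs_sc: "vector_space (sc :: 'k::field \<Rightarrow> ('b \<Rightarrow> 'k) \<Rightarrow> ('b \<Rightarrow> 'k))"
  by unfold_locales (auto simp: sc_def fun_eq_iff plus_fun_def algebra_simps)

lemma vs_k: "vector_space ((*) :: 'k::field \<Rightarrow> 'k \<Rightarrow> 'k)"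
  by unfold_locales (auto simp: algebra_simps)

lemma vsp: "vector_space_pair (sc :: 'k::field \<Rightarrow> ('b \<Rightarrow> 'k) \<Rightarrow> ('b \<Rightarrow> 'k)) ((*) :: 'k \<Rightarrow> 'k \<Rightarrow> 'k)"
  using vs_sc vs_k by (simp add: vector_space_pair_def)

lemma lin_subspace_sub:
  assumes "lin_subspace (W :: ('b \<Rightarrow> 'k::field) set)"
  shows "module.subspace sc W"
proof -
  interpret vector_space "sc :: 'k \<Rightarrow> ('b \<Rightarrow> 'k) \<Rightarrow> ('b \<Rightarrow> 'k)" by (rule vs_sc)
  show ?thesis using assms unfolding subspace_def lin_subspace_def zerov_def
    by (auto simp: zero_fun_def plus_fun_def sc_def)
qed

lemma FE0:
  fixes W :: "('b \<Rightarrow> 'k::field) set"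
  assumes "lin_subspace W" "v \<notin> W"
  shows "\<exists>\<phi>. Vector_Spaces.linear sc ((*) :: 'k \<Rightarrow> 'k \<Rightarrow> 'k) \<phi> \<and> (\<forall>w\<in>W. \<phi> w = 0) \<and> \<phi> v = 1"
proof -
  interpret V: vector_space "sc :: 'k \<Rightarrow> ('b \<Rightarrow> 'k) \<Rightarrow> ('b \<Rightarrow> 'k)" by (rule vs_sc)
  interpret P: vector_space_pair "sc :: 'k \<Rightarrow> ('b \<Rightarrow> 'k) \<Rightarrow> ('b \<Rightarrow> 'k)" "(*) :: 'k \<Rightarrow> 'k \<Rightarrow> 'k" by (rule vsp)
  have sW: "V.subspace W" by (rule lin_subspace_sub[OF assms(1)])
  obtain B where B: "B \<subseteq> W" "V.independent B" "W \<subseteq> V.span B" "card B = V.dim W"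
    by (rule V.basis_exists)
  have spB: "V.span B = W" using B(1,3) sW V.span_minimal by blast
  have vB: "v \<notin> V.span B" using spB assms(2) by simp
  have ind: "V.independent (insert v B)" using V.independent_insertI[OF vB B(2)] .
  define \<phi> where "\<phi> = P.construct (insert v B) (\<lambda>b. if b = v then 1 else 0)"
  have lin: "Vector_Spaces.linear sc (*) \<phi>" unfolding \<phi>_def by (rule P.linear_construct[OF ind])
  have v1: "\<phi> v = 1" unfolding \<phi>_def using P.construct_basis[OF ind] by simp
  have b0: "\<phi> b = 0" if "b \<in> B" for b
  proof -
    have "b \<noteq> v" using that vB V.span_superset by blast
    then show ?thesis unfolding \<phi>_def using P.construct_basis[OF ind, of b] that by simp
  qed
  have lin0: "Vector_Spaces.linear (sc :: 'k \<Rightarrow> ('b \<Rightarrow> 'k) \<Rightarrow> ('b \<Rightarrow> 'k)) ((*) :: 'k \<Rightarrow> 'k \<Rightarrow> 'k) (\<lambda>_. 0)"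
    by (rule P.linear_zero)
  have "\<phi> w = 0" if "w \<in> V.span B" for w
    using P.linear_eq_on[OF lin lin0 that] b0 by simp
  then show ?thesis using lin v1 spB by auto
qed


definition ev :: "'b \<Rightarrow> 'b \<Rightarrow> 'k::field" where "ev m = (\<lambda>i. if i = m then 1 else 0)"
definition pr :: "('b \<Rightarrow> 'k::field) \<Rightarrow> ('b \<Rightarrow> 'k) \<Rightarrow> 'k" where
  "pr p y = (\<Sum>l\<in>{l. y l \<noteq> 0}. p l * y l)"
definition perp :: "('b \<Rightarrow> 'k::field) \<Rightarrow> ('b \<Rightarrow> 'k) set \<Rightarrow> bool" where
  "perp p Y \<longleftrightarrow> (\<forall>y\<in>Y. pr p y = 0)"

lemma zerov_apply[simp]: "zerov i = 0" by (simp add: zerov_def)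

lemma fsupp_Cset: "x \<in> Cset \<longleftrightarrow> finite {i. x i \<noteq> 0}"
  by (simp add: Cset_def fsupp_def)

lemma pr_eq:
  assumes "finite F" "{l. y l \<noteq> 0} \<subseteq> F"
  shows "pr p y = (\<Sum>l\<in>F. p l * y l)"
  unfolding pr_def using assms by (intro sum.mono_neutral_left) auto

lemma fun_sum_apply: "(\<Sum>a\<in>I. f a) i = (\<Sum>a\<in>I. f a i)"
  by (induction I rule: infinite_finite_induct) (auto simp: plus_fun_def zero_fun_def)

lemma FE:
  fixes W :: "('b \<Rightarrow> 'k::field) set"
  assumes "lin_subspace W" "v \<notin> W" "v \<in> Cset"
  shows "\<exists>p. (\<forall>w\<in>W. w \<in> Cset \<longrightarrow> pr p w = 0) \<and> pr p v = 1"
proof -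
  interpret P: vector_space_pair "sc :: 'k \<Rightarrow> ('b \<Rightarrow> 'k) \<Rightarrow> ('b \<Rightarrow> 'k)" "(*) :: 'k \<Rightarrow> 'k \<Rightarrow> 'k" by (rule vsp)
  obtain \<phi> where lin: "Vector_Spaces.linear sc ((*) :: 'k \<Rightarrow> 'k \<Rightarrow> 'k) \<phi>"
    and W0: "\<forall>w\<in>W. \<phi> w = 0" and v1: "\<phi> v = 1" using FE0[OF assms(1,2)] by blast
  define p where "p = (\<lambda>l. \<phi> (ev l))"
  have key: "\<phi> y = pr p y" if "y \<in> Cset" for y :: "'b \<Rightarrow> 'k"
  proof -
    let ?F = "{l. y l \<noteq> 0}"
    have fin: "finite ?F" using that fsupp_Cset by blast
    have "y = (\<Sum>l\<in>?F. sc (y l) (ev l))"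
      by (auto simp: fun_eq_iff fun_sum_apply sc_def ev_def fin if_distrib cong: if_cong)
    then have "\<phi> y = \<phi> (\<Sum>l\<in>?F. sc (y l) (ev l))" by simp
    also have "\<dots> = (\<Sum>l\<in>?F. y l * p l)"
      by (simp add: P.linear_sum[OF lin] P.linear_scale[OF lin] p_def)
    finally show ?thesis by (simp add: pr_def mult.commute)
  qed
  show ?thesis using key W0 v1 assms(3) by (intro exI[of _ p]) auto
qed


lemma ls_zero: "lin_subspace V \<Longrightarrow> zerov \<in> V" by (simp add: lin_subspace_def)
lemma ls_add: "lin_subspace V \<Longrightarrow> x \<in> V \<Longrightarrow> y \<in> V \<Longrightarrow> (\<lambda>i. x i + y i) \<in> V"
  by (simp add: lin_subspace_def)
lemma ls_scale: "lin_subspace V \<Longrightarrow> x \<in> V \<Longrightarrow> (\<lambda>i. a * x i) \<in> V"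
  by (simp add: lin_subspace_def)
lemma ls_neg: "lin_subspace V \<Longrightarrow> x \<in> V \<Longrightarrow> (\<lambda>i. - x i) \<in> V"
  using ls_scale[of V x "-1"] by simp
lemma ls_diff: "lin_subspace V \<Longrightarrow> x \<in> V \<Longrightarrow> y \<in> V \<Longrightarrow> (\<lambda>i. x i - y i) \<in> V"
  using ls_add[OF _ _ ls_neg, of V x y] by simp
lemma ls_zero': "lin_subspace V \<Longrightarrow> (\<lambda>_. 0) \<in> V"
  using ls_zero unfolding zerov_def by blast
lemma ls_sum: assumes "lin_subspace V" "finite I" "\<And>a. a \<in> I \<Longrightarrow> f a \<in> V" shows "(\<lambda>i. \<Sum>a\<in>I. f a i) \<in> V"
  using assms(2,3)
proof (induction I rule: finite_induct)
  case empty then show ?case using ls_zero'[OF assms(1)] by simp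
next
  case (insert a I)
  then show ?case using ls_add[OF assms(1), of "f a" "\<lambda>i. \<Sum>a\<in>I. f a i"] by simp
qed
lemma ls_eq: "x \<in> V \<Longrightarrow> (\<And>i. x i = y i) \<Longrightarrow> y \<in> V"
proof -
  assume "x \<in> V" "\<And>i. x i = y i" then have "x = y" by auto
  then show "y \<in> V" using \<open>x \<in> V\<close> by simp
qed

lemma ls_Int: "lin_subspace X \<Longrightarrow> lin_subspace Y \<Longrightarrow> lin_subspace (X \<inter> Y)"
  by (simp add: lin_subspace_def)

lemma ls_Cset: "lin_subspace (Cset :: ('b \<Rightarrow> 'k::field) set)"
proof -
  have a: "{i. x i + y i \<noteq> 0} \<subseteq> {i. x i \<noteq> 0} \<union> {i. y i \<noteq> (0::'k)}" for x y :: "'b \<Rightarrow> 'k" by auto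
  have b: "{i. a * x i \<noteq> 0} \<subseteq> {i. x i \<noteq> (0::'k)}" for a and x :: "'b \<Rightarrow> 'k" by auto
  show ?thesis unfolding lin_subspace_def Cset_def fsupp_def zerov_def
    using a b by (auto intro: finite_subset)
qed

lemma ls_zero_set: "lin_subspace {zerov}"
  by (auto simp: lin_subspace_def zerov_def)

lemma ls_span: "lin_subspace (lin_span S)"
  unfolding lin_span_def lin_subspace_def by blast
lemma span_sup: "S \<subseteq> lin_span S"
  unfolding lin_span_def by blast
lemma span_min: "lin_subspace V \<Longrightarrow> S \<subseteq> V \<Longrightarrow> lin_span S \<subseteq> V"
  unfolding lin_span_def by blast

lemma ls_ssum: "lin_subspace X \<Longrightarrow> lin_subspace Y \<Longrightarrow> lin_subspace (ssum X Y)"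
  unfolding lin_subspace_def ssum_def
proof (intro conjI ballI allI)
  assume X: "zerov \<in> X \<and> (\<forall>x\<in>X. \<forall>y\<in>X. (\<lambda>i. x i + y i) \<in> X) \<and> (\<forall>a. \<forall>x\<in>X. (\<lambda>i. a * x i) \<in> X)"
    and Y: "zerov \<in> Y \<and> (\<forall>x\<in>Y. \<forall>y\<in>Y. (\<lambda>i. x i + y i) \<in> Y) \<and> (\<forall>a. \<forall>x\<in>Y. (\<lambda>i. a * x i) \<in> Y)"
  show "zerov \<in> {\<lambda>i. x i + y i |x y. x \<in> X \<and> y \<in> Y}"
    using X Y by (intro CollectI exI[of _ zerov]) (auto simp: zerov_def)
  fix x y assume "x \<in> {\<lambda>i. x i + y i |x y. x \<in> X \<and> y \<in> Y}" "y \<in> {\<lambda>i. x i + y i |x y. x \<in> X \<and> y \<in> Y}"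
  then obtain x1 x2 y1 y2 where "x = (\<lambda>i. x1 i + x2 i)" "y = (\<lambda>i. y1 i + y2 i)" "x1 \<in> X" "x2 \<in> Y" "y1 \<in> X" "y2 \<in> Y" by blast
  then show "(\<lambda>i. x i + y i) \<in> {\<lambda>i. x i + y i |x y. x \<in> X \<and> y \<in> Y}"
    using X Y by (intro CollectI exI[of _ "\<lambda>i. x1 i + y1 i"] exI[of _ "\<lambda>i. x2 i + y2 i"]) (auto simp: algebra_simps)
next
  fix a x
  assume X: "zerov \<in> X \<and> (\<forall>x\<in>X. \<forall>y\<in>X. (\<lambda>i. x i + y i) \<in> X) \<and> (\<forall>a. \<forall>x\<in>X. (\<lambda>i. a * x i) \<in> X)"
    and Y: "zerov \<in> Y \<and> (\<forall>x\<in>Y. \<forall>y\<in>Y. (\<lambda>i. x i + y i) \<in> Y) \<and> (\<forall>a. \<forall>x\<in>Y. (\<lambda>i. a * x i) \<in> Y)"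
  assume "x \<in> {\<lambda>i. x i + y i |x y. x \<in> X \<and> y \<in> Y}"
  then obtain x1 x2 where "x = (\<lambda>i. x1 i + x2 i)" "x1 \<in> X" "x2 \<in> Y" by blast
  then show "(\<lambda>i. a * x i) \<in> {\<lambda>i. x i + y i |x y. x \<in> X \<and> y \<in> Y}"
    using X Y by (intro CollectI exI[of _ "\<lambda>i. a * x1 i"] exI[of _ "\<lambda>i. a * x2 i"]) (auto simp: algebra_simps)
qed

lemma ssumI: "x \<in> X \<Longrightarrow> y \<in> Y \<Longrightarrow> (\<lambda>i. x i + y i) \<in> ssum X Y"
  unfolding ssum_def by blast
lemma ssumE: "z \<in> ssum X Y \<Longrightarrow> (\<And>x y. x \<in> X \<Longrightarrow> y \<in> Y \<Longrightarrow> z = (\<lambda>i. x i + y i) \<Longrightarrow> P) \<Longrightarrow> P"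
  unfolding ssum_def by blast
lemma ssum_left: "zerov \<in> Y \<Longrightarrow> X \<subseteq> ssum X Y"
  using ssumI[of _ X zerov Y] by auto
lemma ssum_right: "zerov \<in> X \<Longrightarrow> Y \<subseteq> ssum X Y"
  using ssumI[of zerov X _ Y] by auto
lemma ssum_mono: "X \<subseteq> X' \<Longrightarrow> Y \<subseteq> Y' \<Longrightarrow> ssum X Y \<subseteq> ssum X' Y'"
  unfolding ssum_def by blast
lemma ssum_comm1: "ssum X Y \<subseteq> ssum Y X"
proof
  fix z assume "z \<in> ssum X Y"
  then obtain x y where "x \<in> X" "y \<in> Y" "z = (\<lambda>i. x i + y i)" by (rule ssumE)
  then show "z \<in> ssum Y X" using ssumI[of y Y x X] by (simp add: add.commute)
qed
lemma ssum_comm: "ssum X Y = ssum Y X"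
  using ssum_comm1 by blast
lemma ssum_zero: "lin_subspace X \<Longrightarrow> ssum X {zerov} = X"
proof
  show "ssum X {zerov} \<subseteq> X"
  proof
    fix z assume "z \<in> ssum X {zerov}"
    then obtain x y where "x \<in> X" "y \<in> {zerov}" "z = (\<lambda>i. x i + y i)" by (rule ssumE)
    then show "z \<in> X" by simp
  qed
  show "X \<subseteq> ssum X {zerov}" by (rule ssum_left) simp
qed
lemma ssum_zero2: "lin_subspace X \<Longrightarrow> ssum {zerov} X = X"
  using ssum_zero ssum_comm by metis
lemma ssum_sub: "lin_subspace Z \<Longrightarrow> X \<subseteq> Z \<Longrightarrow> Y \<subseteq> Z \<Longrightarrow> ssum X Y \<subseteq> Z"
  by (auto elim!: ssumE intro: ls_add)

definition prd :: "('b \<Rightarrow> 'k::field) \<Rightarrow> ('b \<Rightarrow> 'k) \<Rightarrow> ('b \<times> 'b \<Rightarrow> 'k)" where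
  "prd x y = (\<lambda>(j, l). x j * y l)"
definition tsum :: "'i set \<Rightarrow> ('i \<Rightarrow> 'b \<Rightarrow> 'k::field) \<Rightarrow> ('i \<Rightarrow> 'b \<Rightarrow> 'k) \<Rightarrow> ('b \<times> 'b \<Rightarrow> 'k)" where
  "tsum I u v = (\<lambda>(j, l). \<Sum>a\<in>I. u a j * v a l)"

lemma ls_tens: "lin_subspace (tens X Y)"
  unfolding tens_def by (rule ls_span)

lemma prd_tens: "x \<in> X \<Longrightarrow> y \<in> Y \<Longrightarrow> prd x y \<in> tens X Y"
proof -
  assume "x \<in> X" "y \<in> Y"
  then have "prd x y \<in> {\<lambda>(j, l). x j * y l |x y. x \<in> X \<and> y \<in> Y}" unfolding prd_def by blast
  then show ?thesis unfolding tens_def by (rule subsetD[OF span_sup])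
qed

lemma tens_mono: "X \<subseteq> X' \<Longrightarrow> Y \<subseteq> Y' \<Longrightarrow> tens X Y \<subseteq> tens X' Y'"
proof -
  assume a: "X \<subseteq> X'" "Y \<subseteq> Y'"
  have "{\<lambda>(j, l). x j * y l |x y. x \<in> X \<and> y \<in> Y} \<subseteq> {\<lambda>(j, l). x j * y l |x y. x \<in> X' \<and> y \<in> Y'}"
    using a by blast
  also have "\<dots> \<subseteq> tens X' Y'" unfolding tens_def by (rule span_sup)
  finally show ?thesis unfolding tens_def[of X Y] by (rule span_min[OF ls_tens])
qed

lemma tsum_tens:
  assumes "finite I" "\<And>a. a \<in> I \<Longrightarrow> u a \<in> X \<and> v a \<in> Y"
  shows "tsum I u v \<in> tens X Y"
proof -
  have "(\<lambda>jl. \<Sum>a\<in>I. prd (u a) (v a) jl) \<in> tens X Y"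
    by (rule ls_sum[OF ls_tens assms(1)]) (use assms(2) prd_tens in blast)
  then show ?thesis unfolding tsum_def prd_def by (simp add: case_prod_beta')
qed

lemma tens_repr:
  fixes X Y :: "('b \<Rightarrow> 'k::field) set"
  assumes "t \<in> tens X Y" and lsX: "lin_subspace X"
  shows "\<exists>I u v. finite (I :: (('b \<Rightarrow> 'k) \<times> ('b \<Rightarrow> 'k)) set) \<and> (\<forall>a\<in>I. u a \<in> X \<and> v a \<in> Y) \<and> t = tsum I u v"
proof -
  define R where "R = {t :: 'b \<times> 'b \<Rightarrow> 'k. \<exists>P w. finite P \<and> P \<subseteq> X \<times> Y \<and>
      t = (\<lambda>(j, l). \<Sum>q\<in>P. w q * fst q j * snd q l)}"
  have "lin_subspace R"
    unfolding lin_subspace_def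
  proof (intro conjI ballI allI)
    show "zerov \<in> R" unfolding R_def by (intro CollectI exI[of _ "{}"]) (auto simp: zerov_def)
  next
    fix x y assume "x \<in> R" "y \<in> R"
    then obtain P1 w1 P2 w2 where 1: "finite P1" "P1 \<subseteq> X \<times> Y" "x = (\<lambda>(j, l). \<Sum>q\<in>P1. w1 q * fst q j * snd q l)"
      and 2: "finite P2" "P2 \<subseteq> X \<times> Y" "y = (\<lambda>(j, l). \<Sum>q\<in>P2. w2 q * fst q j * snd q l)"
      unfolding R_def by blast
    define w where "w q = (if q \<in> P1 then w1 q else 0) + (if q \<in> P2 then w2 q else 0)" for q
    have "(\<lambda>i. x i + y i) = (\<lambda>(j, l). \<Sum>q\<in>P1 \<union> P2. w q * fst q j * snd q l)"
    proof -
      have e1: "(\<Sum>q\<in>P1. w1 q * fst q j * snd q l) = (\<Sum>q\<in>P1 \<union> P2. (if q \<in> P1 then w1 q else 0) * fst q j * snd q l)" for j l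
        using 1 2 by (intro sum.mono_neutral_cong_left) auto
      have e2: "(\<Sum>q\<in>P2. w2 q * fst q j * snd q l) = (\<Sum>q\<in>P1 \<union> P2. (if q \<in> P2 then w2 q else 0) * fst q j * snd q l)" for j l
        using 1 2 by (intro sum.mono_neutral_cong_left) auto
      show ?thesis
      proof
        fix r :: "'b \<times> 'b"
        obtain j l where r: "r = (j, l)" by (cases r)
        have "x r + y r = (\<Sum>q\<in>P1 \<union> P2. (if q \<in> P1 then w1 q else 0) * fst q j * snd q l)
           + (\<Sum>q\<in>P1 \<union> P2. (if q \<in> P2 then w2 q else 0) * fst q j * snd q l)"
          using 1(3) 2(3) e1 e2 r by simp
        also have "\<dots> = (\<Sum>q\<in>P1 \<union> P2. w q * fst q j * snd q l)"
          unfolding w_def by (simp add: sum.distrib[symmetric] distrib_right)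
        finally show "x r + y r = (\<lambda>(j, l). \<Sum>q\<in>P1 \<union> P2. w q * fst q j * snd q l) r" using r by simp
      qed
    qed
    then show "(\<lambda>i. x i + y i) \<in> R" unfolding R_def
      by (intro CollectI exI[of _ "P1 \<union> P2"] exI[of _ w]) (use 1 2 in auto)
  next
    fix a x assume "x \<in> R"
    then obtain P w where 1: "finite P" "P \<subseteq> X \<times> Y" "x = (\<lambda>(j, l). \<Sum>q\<in>P. w q * fst q j * snd q l)"
      unfolding R_def by blast
    have "(\<lambda>i. a * x i) = (\<lambda>(j, l). \<Sum>q\<in>P. (a * w q) * fst q j * snd q l)"
      using 1 by (auto simp: fun_eq_iff sum_distrib_left algebra_simps)
    then show "(\<lambda>i. a * x i) \<in> R" unfolding R_def
      by (intro CollectI exI[of _ P] exI[of _ "\<lambda>q. a * w q"]) (use 1 in auto)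
  qed
  moreover have "{\<lambda>(j, l). x j * y l |x y. x \<in> X \<and> y \<in> Y} \<subseteq> R"
  proof
    fix t assume "t \<in> {\<lambda>(j, l). x j * y l |x y. x \<in> X \<and> y \<in> Y}"
    then obtain x y where "x \<in> X" "y \<in> Y" "t = (\<lambda>(j, l). x j * y l)" by blast
    then show "t \<in> R" unfolding R_def
      by (intro CollectI exI[of _ "{(x, y)}"] exI[of _ "\<lambda>_. 1"]) auto
  qed
  ultimately have "tens X Y \<subseteq> R" unfolding tens_def by (rule span_min)
  then have "t \<in> R" using assms(1) by (rule subsetD)
  then obtain P w where 1: "finite P" "P \<subseteq> X \<times> Y" "t = (\<lambda>(j, l). \<Sum>q\<in>P. w q * fst q j * snd q l)"
    unfolding R_def by blast
  show ?thesis
    apply (rule exI[of _ P], rule exI[of _ "\<lambda>q i. w q * fst q i"], rule exI[of _ snd])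
    using 1 ls_scale[OF lsX] by (auto simp: tsum_def mult.assoc)
qed


definition rc :: "('b \<times> 'b \<Rightarrow> 'k::field) \<Rightarrow> ('b \<Rightarrow> 'k) \<Rightarrow> ('b \<Rightarrow> 'k)" where
  "rc t p = (\<lambda>j. pr p (\<lambda>l. t (j, l)))"
definition swp :: "('b \<times> 'b \<Rightarrow> 'k) \<Rightarrow> ('b \<times> 'b \<Rightarrow> 'k)" where
  "swp t = (\<lambda>(j, l). t (l, j))"
definition lc :: "('b \<Rightarrow> 'k::field) \<Rightarrow> ('b \<times> 'b \<Rightarrow> 'k) \<Rightarrow> ('b \<Rightarrow> 'k)" where
  "lc p t = rc (swp t) p"

lemma pr_lin_sum:
  assumes "finite I" "\<And>a. a \<in> I \<Longrightarrow> v a \<in> Cset"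
  shows "pr p (\<lambda>l. \<Sum>a\<in>I. w a * v a l) = (\<Sum>a\<in>I. w a * pr p (v a))"
proof -
  define F where "F = (\<Union>a\<in>I. {l. v a l \<noteq> 0})"
  have fin: "finite F" unfolding F_def using assms by (auto simp: fsupp_Cset)
  have "pr p (\<lambda>l. \<Sum>a\<in>I. w a * v a l) = (\<Sum>l\<in>F. p l * (\<Sum>a\<in>I. w a * v a l))"
  proof (rule pr_eq[OF fin])
    show "{l. (\<Sum>a\<in>I. w a * v a l) \<noteq> 0} \<subseteq> F"
    proof
      fix l assume "l \<in> {l. (\<Sum>a\<in>I. w a * v a l) \<noteq> 0}"
      then have "(\<Sum>a\<in>I. w a * v a l) \<noteq> 0" by simp
      then obtain a where "a \<in> I" "w a * v a l \<noteq> 0" by (rule sum.not_neutral_contains_not_neutral)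
      then show "l \<in> F" unfolding F_def by auto
    qed
  qed
  also have "\<dots> = (\<Sum>l\<in>F. \<Sum>a\<in>I. w a * (p l * v a l))"
    by (simp add: sum_distrib_left mult.left_commute)
  also have "\<dots> = (\<Sum>a\<in>I. \<Sum>l\<in>F. w a * (p l * v a l))"
    by (rule sum.swap)
  also have "\<dots> = (\<Sum>a\<in>I. w a * (\<Sum>l\<in>F. p l * v a l))"
    by (simp add: sum_distrib_left)
  also have "\<dots> = (\<Sum>a\<in>I. w a * pr p (v a))"
    by (intro sum.cong refl arg_cong2[where f="(*)"] pr_eq[symmetric] fin) (auto simp: F_def)
  finally show ?thesis .
qed

lemma pr_add: "x \<in> Cset \<Longrightarrow> y \<in> Cset \<Longrightarrow> pr p (\<lambda>l. x l + y l) = pr p x + pr p y"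
  using pr_lin_sum[of "{True, False}" "\<lambda>a. if a then x else y" p "\<lambda>_. 1"] by simp

lemma pr_scale: "x \<in> Cset \<Longrightarrow> pr p (\<lambda>l. a * x l) = a * pr p x"
  using pr_lin_sum[of "{True}" "\<lambda>_. x" p "\<lambda>_. a"] by simp

lemma pr_zero[simp]: "pr p zerov = 0" by (simp add: pr_def)
lemma pr_zero'[simp]: "pr p (\<lambda>_. 0) = 0" by (simp add: pr_def)

lemma tsum_Cset:
  assumes "finite I" "\<And>a. a \<in> I \<Longrightarrow> u a \<in> Cset \<and> v a \<in> Cset"
  shows "tsum I u v \<in> Cset"
proof -
  have "{q. tsum I u v q \<noteq> 0} \<subseteq> (\<Union>a\<in>I. {j. u a j \<noteq> 0} \<times> {l. v a l \<noteq> 0})"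
  proof
    fix q assume "q \<in> {q. tsum I u v q \<noteq> 0}"
    then have "(\<Sum>a\<in>I. u a (fst q) * v a (snd q)) \<noteq> 0" unfolding tsum_def by (simp add: case_prod_beta')
    then obtain a where "a \<in> I" "u a (fst q) * v a (snd q) \<noteq> 0"
      by (rule sum.not_neutral_contains_not_neutral)
    then show "q \<in> (\<Union>a\<in>I. {j. u a j \<noteq> 0} \<times> {l. v a l \<noteq> 0})" by (cases q) auto
  qed
  moreover have "finite (\<Union>a\<in>I. {j. u a j \<noteq> 0} \<times> {l. v a l \<noteq> 0})"
    using assms by (auto simp: fsupp_Cset)
  ultimately show ?thesis by (auto simp: fsupp_Cset intro: finite_subset)
qed

lemma tens_Cset: 
  fixes U V :: "('b \<Rightarrow> 'k::field) set"
  assumes "t \<in> tens U V" "lin_subspace U" "U \<subseteq> Cset" "V \<subseteq> Cset" shows "t \<in> Cset"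
proof -
  obtain I u v where I: "finite (I :: (('b \<Rightarrow> 'k) \<times> ('b \<Rightarrow> 'k)) set)" "\<forall>a\<in>I. u a \<in> U \<and> v a \<in> V" "t = tsum I u v"
    using tens_repr[OF assms(1,2)] by blast
  show ?thesis unfolding I(3) by (rule tsum_Cset[OF I(1)]) (use I(2) assms(3,4) in blast)
qed

lemma rc_tsum:
  assumes "finite I" "\<And>a. a \<in> I \<Longrightarrow> v a \<in> Cset"
  shows "rc (tsum I u v) p = (\<lambda>j. \<Sum>a\<in>I. u a j * pr p (v a))"
  unfolding rc_def tsum_def using pr_lin_sum[OF assms] by simp

lemma swp_tsum: "swp (tsum I u v) = tsum I v u"
  unfolding swp_def tsum_def by (auto simp: fun_eq_iff mult.commute)

lemma swp_swp[simp]: "swp (swp t) = t"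
  unfolding swp_def by (auto simp: fun_eq_iff)

lemma swp_add: "swp (\<lambda>i. a i + b i) = (\<lambda>i. swp a i + swp b i)"
  unfolding swp_def by (auto simp: fun_eq_iff)

lemma swp_zero[simp]: "swp zerov = zerov"
  unfolding swp_def by (auto simp: fun_eq_iff)

lemma swp_tens:
  fixes U V :: "('b \<Rightarrow> 'k::field) set"
  assumes "t \<in> tens U V" "lin_subspace U" shows "swp t \<in> tens V U"
proof -
  obtain I u v where I: "finite (I :: (('b \<Rightarrow> 'k) \<times> ('b \<Rightarrow> 'k)) set)" "\<forall>a\<in>I. u a \<in> U \<and> v a \<in> V" "t = tsum I u v"
    using tens_repr[OF assms(1,2)] by blast
  have "tsum I v u \<in> tens V U" by (rule tsum_tens) (use I in auto)
  then show ?thesis using I(3) swp_tsum by metis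
qed

lemma swp_ssum: "t \<in> ssum (tens A B) (tens C D) \<Longrightarrow> lin_subspace A \<Longrightarrow> lin_subspace C \<Longrightarrow> swp t \<in> ssum (tens B A) (tens D C)"
  by (erule ssumE) (auto simp: swp_add intro!: ssumI swp_tens)

lemma lc_tsum:
  assumes "finite I" "\<And>a. a \<in> I \<Longrightarrow> u a \<in> Cset"
  shows "lc p (tsum I u v) = (\<lambda>l. \<Sum>a\<in>I. v a l * pr p (u a))"
  unfolding lc_def swp_tsum using rc_tsum[OF assms] by simp

lemma rc_tens:
  fixes U V :: "('b \<Rightarrow> 'k::field) set"
  assumes "t \<in> tens U V" "lin_subspace U" "V \<subseteq> Cset"
  shows "rc t p \<in> U"
proof -
  obtain I u v where I: "finite (I :: (('b \<Rightarrow> 'k) \<times> ('b \<Rightarrow> 'k)) set)" "\<forall>a\<in>I. u a \<in> U \<and> v a \<in> V" "t = tsum I u v"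
    using tens_repr[OF assms(1,2)] by blast
  have "rc t p = (\<lambda>j. \<Sum>a\<in>I. u a j * pr p (v a))" using I assms(3) by (auto intro: rc_tsum)
  also have "\<dots> \<in> U" using I assms(2)
    by (intro ls_sum) (auto intro: ls_scale[of U _ "pr p _", simplified mult.commute])
  finally show ?thesis .
qed

lemma rc_tens_perp:
  fixes U V :: "('b \<Rightarrow> 'k::field) set"
  assumes "t \<in> tens U V" "V \<subseteq> Cset" "perp p V" "lin_subspace U"
  shows "rc t p = zerov"
proof -
  obtain I u v where I: "finite (I :: (('b \<Rightarrow> 'k) \<times> ('b \<Rightarrow> 'k)) set)" "\<forall>a\<in>I. u a \<in> U \<and> v a \<in> V" "t = tsum I u v"
    using tens_repr[OF assms(1,4)] by blast
  have "rc t p = (\<lambda>j. \<Sum>a\<in>I. u a j * pr p (v a))" using I assms(2) by (auto intro: rc_tsum)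
  also have "\<dots> = zerov" using I assms(3) by (auto simp: perp_def zerov_def fun_eq_iff)
  finally show ?thesis .
qed

lemma lc_tens:
  assumes "t \<in> tens U V" "lin_subspace V" "U \<subseteq> Cset" "lin_subspace U"
  shows "lc p t \<in> V"
  unfolding lc_def by (rule rc_tens[OF swp_tens[OF assms(1,4)] assms(2,3)])

lemma lc_tens_perp:
  assumes "t \<in> tens U V" "U \<subseteq> Cset" "perp p U" "lin_subspace U" "lin_subspace V"
  shows "lc p t = zerov"
  unfolding lc_def by (rule rc_tens_perp[OF swp_tens[OF assms(1,4)] assms(2,3,5)])

lemma rows_Cset: "t \<in> Cset \<Longrightarrow> (\<lambda>l. t (j, l)) \<in> Cset"
proof -
  assume "t \<in> Cset"
  then have "finite {q. t q \<noteq> 0}" by (simp add: fsupp_Cset)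
  then have "finite (snd ` {q. t q \<noteq> 0})" by simp
  moreover have "{l. t (j, l) \<noteq> 0} \<subseteq> snd ` {q. t q \<noteq> 0}" by force
  ultimately show ?thesis by (auto simp: fsupp_Cset intro: finite_subset)
qed

lemma swp_Cset: "t \<in> Cset \<Longrightarrow> swp t \<in> Cset"
proof -
  assume "t \<in> Cset"
  then have "finite {q. t q \<noteq> 0}" by (simp add: fsupp_Cset)
  then have "finite ((\<lambda>(a, b). (b, a)) ` {q. t q \<noteq> 0})" by simp
  moreover have "{q. swp t q \<noteq> 0} \<subseteq> (\<lambda>(a, b). (b, a)) ` {q. t q \<noteq> 0}"
    unfolding swp_def by force
  ultimately show ?thesis by (auto simp: fsupp_Cset intro: finite_subset)
qed

lemma rc_Cset: "t \<in> Cset \<Longrightarrow> rc t p \<in> Cset"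
proof -
  assume "t \<in> Cset"
  then have "finite {q. t q \<noteq> 0}" by (simp add: fsupp_Cset)
  then have "finite (fst ` {q. t q \<noteq> 0})" by simp
  moreover have "{j. rc t p j \<noteq> 0} \<subseteq> fst ` {q. t q \<noteq> 0}"
  proof
    fix j assume "j \<in> {j. rc t p j \<noteq> 0}"
    then have "{l. t (j, l) \<noteq> 0} \<noteq> {}" unfolding rc_def pr_def by (auto intro: ccontr)
    then show "j \<in> fst ` {q. t q \<noteq> 0}" by force
  qed
  ultimately show ?thesis by (auto simp: fsupp_Cset intro: finite_subset)
qed

lemma lc_Cset: "t \<in> Cset \<Longrightarrow> lc p t \<in> Cset"
  unfolding lc_def by (intro rc_Cset swp_Cset)

lemma rc_add:
  assumes "t1 \<in> Cset" "t2 \<in> Cset"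
  shows "rc (\<lambda>i. t1 i + t2 i) p = (\<lambda>j. rc t1 p j + rc t2 p j)"
  unfolding rc_def using pr_add[OF rows_Cset[OF assms(1)] rows_Cset[OF assms(2)]] by simp

lemma lc_add:
  assumes "t1 \<in> Cset" "t2 \<in> Cset"
  shows "lc p (\<lambda>i. t1 i + t2 i) = (\<lambda>j. lc p t1 j + lc p t2 j)"
  unfolding lc_def swp_add by (rule rc_add[OF swp_Cset[OF assms(1)] swp_Cset[OF assms(2)]])

lemma rc_ssum:
  assumes "t \<in> ssum (tens X V) (tens U Y)" "lin_subspace X" "X \<subseteq> Cset" "U \<subseteq> Cset"
    "V \<subseteq> Cset" "Y \<subseteq> Cset" "perp p Y" "lin_subspace U"
  shows "rc t p \<in> X"
proof -
  obtain t1 t2 where t: "t1 \<in> tens X V" "t2 \<in> tens U Y" "t = (\<lambda>i. t1 i + t2 i)"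
    using assms(1) by (rule ssumE)
  have c: "t1 \<in> Cset" "t2 \<in> Cset" using t assms tens_Cset by blast+
  have "rc t p = (\<lambda>j. rc t1 p j + rc t2 p j)" using rc_add[OF c] t by simp
  also have "\<dots> = rc t1 p" using rc_tens_perp[OF t(2) assms(6,7,8)] by simp
  also have "\<dots> \<in> X" by (rule rc_tens[OF t(1) assms(2,5)])
  finally show ?thesis .
qed

lemma lc_ssum:
  assumes "t \<in> ssum (tens X V) (tens U Y)" "lin_subspace Y" "X \<subseteq> Cset" "U \<subseteq> Cset"
    "V \<subseteq> Cset" "Y \<subseteq> Cset" "perp p X" "lin_subspace X" "lin_subspace U" "lin_subspace V"
  shows "lc p t \<in> Y"
proof -
  have "swp t \<in> ssum (tens Y U) (tens V X)" using swp_ssum[OF assms(1,8,9)] by (simp add: ssum_comm)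
  then show ?thesis unfolding lc_def using rc_ssum assms by blast
qed


lemma span_char:
  assumes "lin_subspace Y" "finite J"
  shows "lin_span (Y \<union> v ` J) \<subseteq> {\<lambda>i. y i + (\<Sum>b\<in>J. \<mu> b * v b i) | y \<mu>. y \<in> Y}"
proof (rule span_min)
  let ?R = "{\<lambda>i. y i + (\<Sum>b\<in>J. \<mu> b * v b i) | y \<mu>. y \<in> Y}"
  show "lin_subspace ?R" unfolding lin_subspace_def
  proof (intro conjI ballI allI)
    show "zerov \<in> ?R" using ls_zero[OF assms(1)]
      by (intro CollectI exI[of _ zerov] exI[of _ "\<lambda>_. 0"]) (auto simp: zerov_def)
  next
    fix x z assume "x \<in> ?R" "z \<in> ?R"
    then obtain y1 m1 y2 m2 where "y1 \<in> Y" "x = (\<lambda>i. y1 i + (\<Sum>b\<in>J. m1 b * v b i))"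
      "y2 \<in> Y" "z = (\<lambda>i. y2 i + (\<Sum>b\<in>J. m2 b * v b i))" by blast
    then show "(\<lambda>i. x i + z i) \<in> ?R" using ls_add[OF assms(1)]
      by (intro CollectI exI[of _ "\<lambda>i. y1 i + y2 i"] exI[of _ "\<lambda>b. m1 b + m2 b"])
        (auto simp: fun_eq_iff sum.distrib algebra_simps)
  next
    fix a x assume "x \<in> ?R"
    then obtain y1 m1 where "y1 \<in> Y" "x = (\<lambda>i. y1 i + (\<Sum>b\<in>J. m1 b * v b i))" by blast
    then show "(\<lambda>i. a * x i) \<in> ?R" using ls_scale[OF assms(1)]
      by (intro CollectI exI[of _ "\<lambda>i. a * y1 i"] exI[of _ "\<lambda>b. a * m1 b"])
        (auto simp: fun_eq_iff sum_distrib_left algebra_simps)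
  qed
  show "Y \<union> v ` J \<subseteq> ?R"
  proof
    fix w assume "w \<in> Y \<union> v ` J"
    then show "w \<in> ?R"
    proof
      assume "w \<in> Y" then show ?thesis by (intro CollectI exI[of _ w] exI[of _ "\<lambda>_. 0"]) auto
    next
      assume "w \<in> v ` J"
      then obtain b where b: "b \<in> J" "w = v b" by blast
      have "(\<Sum>c\<in>J. (if c = b then 1 else 0) * v c i) = v b i" for i
        using b(1) assms(2) by (simp add: if_distrib[of "\<lambda>x. x * _"] sum.delta cong: if_cong)
      then show ?thesis using b ls_zero[OF assms(1)]
        by (intro CollectI exI[of _ zerov] exI[of _ "\<lambda>c. if c = b then 1 else 0"]) (auto simp: fun_eq_iff)
    qed
  qed
qed

lemma rc_prd: "y \<in> Cset \<Longrightarrow> rc (prd x y) p = (\<lambda>j. x j * pr p y)"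
  unfolding rc_def prd_def by (simp add: pr_scale)

lemma prd_Cset: assumes "x \<in> Cset" "y \<in> Cset" shows "prd x y \<in> Cset"
  by (rule tens_Cset[OF prd_tens[OF assms] ls_Cset subset_refl subset_refl])

lemma CORE_aux:
  fixes U V X Y :: "('b \<Rightarrow> 'k::field) set" and u v :: "'i \<Rightarrow> 'b \<Rightarrow> 'k"
  assumes lsU: "lin_subspace U" and lsV: "lin_subspace V" and lsX: "lin_subspace X"
    and lsY: "lin_subspace Y" and UC: "U \<subseteq> Cset" and VC: "V \<subseteq> Cset" and YC: "Y \<subseteq> Cset"
  shows "finite I \<Longrightarrow> card I = n \<Longrightarrow> (\<forall>a\<in>I. u a \<in> U \<and> v a \<in> V) \<Longrightarrow>
    (\<forall>p. perp p Y \<longrightarrow> rc (tsum I u v) p \<in> X) \<Longrightarrow>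
    tsum I u v \<in> ssum (tens (X \<inter> U) V) (tens U (Y \<inter> V))"
proof (induction n arbitrary: I u rule: less_induct)
  case (less n I u)
  note fin = less.prems(1) and uv = less.prems(3) and hyp = less.prems(4)
  show ?case
  proof (cases "\<exists>k\<in>I. v k \<in> lin_span (Y \<union> v ` (I - {k}))")
    case True
    then obtain k where k: "k \<in> I" "v k \<in> lin_span (Y \<union> v ` (I - {k}))" by blast
    define J where "J = I - {k}"
    have finJ: "finite J" using fin by (simp add: J_def)
    obtain y \<mu> where y: "y \<in> Y" "v k = (\<lambda>i. y i + (\<Sum>b\<in>J. \<mu> b * v b i))"
      using span_char[OF lsY finJ, of v] k(2) unfolding J_def by blast
    have yeq: "y = (\<lambda>i. v k i - (\<Sum>b\<in>J. \<mu> b * v b i))" using y(2) by (auto simp: fun_eq_iff)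
    have "(\<lambda>i. \<Sum>b\<in>J. \<mu> b * v b i) \<in> V"
      by (rule ls_sum[OF lsV finJ]) (use uv ls_scale[OF lsV] J_def in auto)
    then have yV: "y \<in> V" unfolding yeq using ls_diff[OF lsV] uv k(1) by blast
    have yC: "y \<in> Cset" using y YC by blast
    define u' where "u' b = (\<lambda>j. u b j + \<mu> b * u k j)" for b
    have IJ: "I = insert k J" "k \<notin> J" using k(1) by (auto simp: J_def)
    have eq: "tsum I u v = (\<lambda>q. tsum J u' v q + prd (u k) y q)"
    proof
      fix q :: "'b \<times> 'b"
      obtain j l where q: "q = (j, l)" by (cases q)
      have "tsum I u v q = u k j * v k l + (\<Sum>b\<in>J. u b j * v b l)"
        unfolding q tsum_def using IJ finJ by simp
      also have "\<dots> = u k j * y l + (\<Sum>b\<in>J. u' b j * v b l)"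
        unfolding y(2) u'_def by (simp add: algebra_simps sum_distrib_left sum.distrib)
      finally show "tsum I u v q = tsum J u' v q + prd (u k) y q"
        unfolding q tsum_def prd_def by simp
    qed
    have u'U: "u' b \<in> U" if "b \<in> J" for b
      unfolding u'_def using that uv IJ ls_add[OF lsU] ls_scale[OF lsU] by auto
    have cardJ: "card J < n" using less.prems(2) card_Diff1_less[OF fin k(1)] by (simp add: J_def)
    have tJC: "tsum J u' v \<in> Cset"
      by (rule tsum_Cset[OF finJ]) (use u'U uv UC VC IJ in blast)
    have pC: "prd (u k) y \<in> Cset" using prd_Cset uv k(1) UC yC by blast
    have "tsum J u' v \<in> ssum (tens (X \<inter> U) V) (tens U (Y \<inter> V))"
    proof (rule less.IH[OF cardJ finJ refl])
      show "\<forall>a\<in>J. u' a \<in> U \<and> v a \<in> V" using u'U uv IJ by blast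
      show "\<forall>p. perp p Y \<longrightarrow> rc (tsum J u' v) p \<in> X"
      proof (intro allI impI)
        fix p assume pp: "perp p Y"
        have "rc (tsum I u v) p = (\<lambda>j. rc (tsum J u' v) p j + rc (prd (u k) y) p j)"
          unfolding eq by (rule rc_add[OF tJC pC])
        also have "\<dots> = rc (tsum J u' v) p"
          using pp y(1) by (simp add: rc_prd[OF yC] perp_def)
        finally show "rc (tsum J u' v) p \<in> X" using hyp pp by metis
      qed
    qed
    then obtain z1 z2 where z: "z1 \<in> tens (X \<inter> U) V" "z2 \<in> tens U (Y \<inter> V)"
      "tsum J u' v = (\<lambda>i. z1 i + z2 i)" by (rule ssumE)
    have "(\<lambda>i. z2 i + prd (u k) y i) \<in> tens U (Y \<inter> V)"
      by (rule ls_add[OF ls_tens z(2) prd_tens]) (use uv k(1) y(1) yV in auto)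
    then have "(\<lambda>i. z1 i + (z2 i + prd (u k) y i)) \<in> ssum (tens (X \<inter> U) V) (tens U (Y \<inter> V))"
      using ssumI[OF z(1)] by blast
    then show ?thesis unfolding eq z(3) by (simp add: add.assoc)
  next
    case False
    have uX: "u k \<in> X" if kI: "k \<in> I" for k
    proof -
      define W where "W = lin_span (Y \<union> v ` (I - {k}))"
      have vW: "v k \<notin> W" using False kI W_def by blast
      have vC: "v k \<in> Cset" using uv kI VC by blast
      obtain p where p: "\<forall>w\<in>W. w \<in> Cset \<longrightarrow> pr p w = 0" "pr p (v k) = 1"
        using FE[OF ls_span vW[unfolded W_def] vC] unfolding W_def by blast
      have perpY: "perp p Y" unfolding perp_def using p(1) span_sup YC unfolding W_def by blast
      have vb: "pr p (v b) = 0" if "b \<in> I - {k}" for b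
        using p(1) span_sup[of "Y \<union> v ` (I - {k})"] that uv VC unfolding W_def by blast
      have "rc (tsum I u v) p = (\<lambda>j. \<Sum>a\<in>I. u a j * pr p (v a))"
        by (rule rc_tsum[OF fin]) (use uv VC in blast)
      also have "\<dots> = u k"
      proof
        fix j
        have "(\<Sum>a\<in>I. u a j * pr p (v a)) = u k j * pr p (v k) + (\<Sum>a\<in>I - {k}. u a j * pr p (v a))"
          using fin kI by (simp add: sum.remove)
        also have "\<dots> = u k j" using vb p(2) by simp
        finally show "(\<Sum>a\<in>I. u a j * pr p (v a)) = u k j" .
      qed
      finally show ?thesis using hyp perpY by metis
    qed
    have "tsum I u v \<in> tens (X \<inter> U) V"
      by (rule tsum_tens[OF fin]) (use uX uv in blast)
    moreover have "zerov \<in> tens U (Y \<inter> V)" by (rule ls_zero[OF ls_tens])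
    ultimately show ?thesis using ssum_left by blast
  qed
qed

lemma CORE:
  fixes U V X Y :: "('b \<Rightarrow> 'k::field) set"
  assumes "lin_subspace U" "lin_subspace V" "lin_subspace X" "lin_subspace Y"
    "U \<subseteq> Cset" "V \<subseteq> Cset" "Y \<subseteq> Cset" "t \<in> tens U V"
    "\<forall>p. perp p Y \<longrightarrow> rc t p \<in> X"
  shows "t \<in> ssum (tens (X \<inter> U) V) (tens U (Y \<inter> V))"
proof -
  obtain I u v where I: "finite (I :: (('b \<Rightarrow> 'k) \<times> ('b \<Rightarrow> 'k)) set)" "\<forall>a\<in>I. u a \<in> U \<and> v a \<in> V" "t = tsum I u v"
    using tens_repr[OF assms(8,1)] by blast
  show ?thesis using CORE_aux[OF assms(1-7) I(1) refl I(2)] assms(9) I(3) by blast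
qed

lemma CORE_L:
  assumes "lin_subspace U" "lin_subspace V" "lin_subspace X" "lin_subspace Y"
    "U \<subseteq> Cset" "V \<subseteq> Cset" "Y \<subseteq> Cset" "t \<in> tens U V"
    "\<forall>p. perp p Y \<longrightarrow> lc p t \<in> X"
  shows "t \<in> ssum (tens U (X \<inter> V)) (tens (Y \<inter> U) V)"
proof -
  have "swp t \<in> ssum (tens (X \<inter> V) U) (tens V (Y \<inter> U))"
    by (rule CORE[OF assms(2,1,3,4,6,5,7) swp_tens[OF assms(8,1)]]) (use assms(9) in \<open>simp add: lc_def\<close>)
  from swp_ssum[OF this ls_Int[OF assms(3,2)] assms(2)] show ?thesis by simp
qed

lemma CORE2:
  assumes lsU: "lin_subspace U" and lsV: "lin_subspace V" and "lin_subspace X1" "lin_subspace Y1"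
    "lin_subspace X2" "lin_subspace Y2"
    and UC: "U \<subseteq> Cset" and VC: "V \<subseteq> Cset" "Y1 \<subseteq> Cset" "Y2 \<subseteq> Cset" and t: "t \<in> tens U V"
    and h1: "\<forall>p. perp p Y1 \<longrightarrow> rc t p \<in> X1" and h2: "\<forall>p. perp p Y2 \<longrightarrow> rc t p \<in> X2"
  shows "t \<in> ssum (tens (ssum X1 X2 \<inter> U) V) (tens U (Y1 \<inter> Y2 \<inter> V))"
proof -
  have "t \<in> ssum (tens (X2 \<inter> U) V) (tens U (Y2 \<inter> V))"
    by (rule CORE) (use assms in auto)
  then obtain t1 t2 where tt: "t1 \<in> tens (X2 \<inter> U) V" "t2 \<in> tens U (Y2 \<inter> V)" "t = (\<lambda>i. t1 i + t2 i)"
    by (rule ssumE)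
  have c1: "t1 \<in> Cset" by (rule tens_Cset[OF tt(1) ls_Int[OF assms(5) lsU]]) (use UC VC in auto)
  have c2: "t2 \<in> Cset" by (rule tens_Cset[OF tt(2) lsU UC]) (use VC in auto)
  have lsS: "lin_subspace (ssum X1 X2)" using assms by (intro ls_ssum)
  have "t2 \<in> ssum (tens (ssum X1 X2 \<inter> U) (Y2 \<inter> V)) (tens U (Y1 \<inter> (Y2 \<inter> V)))"
  proof (rule CORE)
    show "\<forall>p. perp p Y1 \<longrightarrow> rc t2 p \<in> ssum X1 X2"
    proof (intro allI impI)
      fix p assume pp: "perp p Y1"
      have r: "rc t p = (\<lambda>j. rc t1 p j + rc t2 p j)" unfolding tt(3) by (rule rc_add[OF c1 c2])
      have r1: "rc t1 p \<in> X2" using rc_tens[OF tt(1) ls_Int[OF assms(5) lsU] VC(1)] by blast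
      have "rc t2 p = (\<lambda>j. rc t p j + (- rc t1 p j))" using r by (auto simp: fun_eq_iff)
      also have "\<dots> \<in> ssum X1 X2" using h1 pp ls_neg[OF assms(5) r1] by (intro ssumI) auto
      finally show "rc t2 p \<in> ssum X1 X2" .
    qed
  qed (use assms lsS ls_Int tt(2) in auto)
  then obtain a b where ab: "a \<in> tens (ssum X1 X2 \<inter> U) (Y2 \<inter> V)" "b \<in> tens U (Y1 \<inter> (Y2 \<inter> V))"
    "t2 = (\<lambda>i. a i + b i)" by (rule ssumE)
  have X2S: "X2 \<subseteq> ssum X1 X2" using ssum_right ls_zero assms by blast
  have "t1 \<in> tens (ssum X1 X2 \<inter> U) V" using tt(1) tens_mono[of "X2 \<inter> U" "ssum X1 X2 \<inter> U" V V] X2S by blast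
  moreover have "a \<in> tens (ssum X1 X2 \<inter> U) V" using ab(1) tens_mono[of _ _ "Y2 \<inter> V" V] by blast
  ultimately have "(\<lambda>i. t1 i + a i) \<in> tens (ssum X1 X2 \<inter> U) V" by (rule ls_add[OF ls_tens])
  moreover have "b \<in> tens U (Y1 \<inter> Y2 \<inter> V)" using ab(2) by (simp add: Int_assoc)
  ultimately have "(\<lambda>i. (t1 i + a i) + b i) \<in> ssum (tens (ssum X1 X2 \<inter> U) V) (tens U (Y1 \<inter> Y2 \<inter> V))"
    by (rule ssumI)
  then show ?thesis unfolding tt(3) ab(3) by (simp add: add.assoc)
qed

lemma CORE2_L:
  assumes "lin_subspace U" "lin_subspace V" "lin_subspace X1" "lin_subspace Y1"
    "lin_subspace X2" "lin_subspace Y2"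
    "U \<subseteq> Cset" "V \<subseteq> Cset" "Y1 \<subseteq> Cset" "Y2 \<subseteq> Cset" "t \<in> tens U V"
    "\<forall>p. perp p Y1 \<longrightarrow> lc p t \<in> X1" "\<forall>p. perp p Y2 \<longrightarrow> lc p t \<in> X2"
  shows "t \<in> ssum (tens U (ssum X1 X2 \<inter> V)) (tens (Y1 \<inter> Y2 \<inter> U) V)"
proof -
  have "swp t \<in> ssum (tens (ssum X1 X2 \<inter> V) U) (tens V (Y1 \<inter> Y2 \<inter> U))"
    by (rule CORE2[OF assms(2,1,3-6,8,7,9,10) swp_tens[OF assms(11,1)]]) (use assms(12,13) in \<open>simp_all add: lc_def\<close>)
  from swp_ssum[OF this ls_Int[OF ls_ssum[OF assms(3,5)] assms(2)] assms(2)] show ?thesis by simp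
qed


definition cax :: "('b \<Rightarrow> 'b \<Rightarrow> 'b \<Rightarrow> 'k::field) \<Rightarrow> bool" where
  "cax c \<longleftrightarrow> (\<forall>i. finite (row c i)) \<and>
     (\<forall>i j k l. (\<Sum>m\<in>row c i. c i m l * c m j k) = (\<Sum>m\<in>row c i. c i j m * c m k l))"

definition cv :: "('b \<Rightarrow> 'b \<Rightarrow> 'b \<Rightarrow> 'k::field) \<Rightarrow> ('b \<Rightarrow> 'k) \<Rightarrow> ('b \<Rightarrow> 'k) \<Rightarrow> ('b \<Rightarrow> 'k)" where
  "cv c q p = (\<lambda>m. pr q (rc (delta c (ev m)) p))"

lemma P_dacb: "(\<Sum>a\<in>G. \<Sum>b\<in>G. \<Sum>c\<in>G. \<Sum>d\<in>G. f a b c d) = (\<Sum>d\<in>G. \<Sum>a\<in>G. \<Sum>c\<in>G. \<Sum>b\<in>G. (f a b c d :: 'a::comm_monoid_add))"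
proof -
  have "(\<Sum>a\<in>G. \<Sum>b\<in>G. \<Sum>c\<in>G. \<Sum>d\<in>G. f a b c d) = (\<Sum>a\<in>G. \<Sum>b\<in>G. \<Sum>d\<in>G. \<Sum>c\<in>G. f a b c d)"
    by (intro sum.cong refl sum.swap)
  also have "\<dots> = (\<Sum>a\<in>G. \<Sum>d\<in>G. \<Sum>b\<in>G. \<Sum>c\<in>G. f a b c d)"
    by (intro sum.cong refl sum.swap)
  also have "\<dots> = (\<Sum>d\<in>G. \<Sum>a\<in>G. \<Sum>b\<in>G. \<Sum>c\<in>G. f a b c d)"
    by (rule sum.swap)
  also have "\<dots> = (\<Sum>d\<in>G. \<Sum>a\<in>G. \<Sum>c\<in>G. \<Sum>b\<in>G. f a b c d)"
    by (intro sum.cong refl sum.swap)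
  finally show ?thesis .
qed

lemma P_dbca: "(\<Sum>a\<in>G. \<Sum>b\<in>G. \<Sum>c\<in>G. \<Sum>d\<in>G. f a b c d) = (\<Sum>d\<in>G. \<Sum>b\<in>G. \<Sum>c\<in>G. \<Sum>a\<in>G. (f a b c d :: 'a::comm_monoid_add))"
proof -
  have "(\<Sum>a\<in>G. \<Sum>b\<in>G. \<Sum>c\<in>G. \<Sum>d\<in>G. f a b c d) = (\<Sum>a\<in>G. \<Sum>b\<in>G. \<Sum>d\<in>G. \<Sum>c\<in>G. f a b c d)"
    by (intro sum.cong refl sum.swap)
  also have "\<dots> = (\<Sum>a\<in>G. \<Sum>d\<in>G. \<Sum>b\<in>G. \<Sum>c\<in>G. f a b c d)"
    by (intro sum.cong refl sum.swap)
  also have "\<dots> = (\<Sum>d\<in>G. \<Sum>a\<in>G. \<Sum>b\<in>G. \<Sum>c\<in>G. f a b c d)"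
    by (rule sum.swap)
  also have "\<dots> = (\<Sum>d\<in>G. \<Sum>b\<in>G. \<Sum>a\<in>G. \<Sum>c\<in>G. f a b c d)"
    by (intro sum.cong refl sum.swap)
  also have "\<dots> = (\<Sum>d\<in>G. \<Sum>b\<in>G. \<Sum>c\<in>G. \<Sum>a\<in>G. f a b c d)"
    by (intro sum.cong refl sum.swap)
  finally show ?thesis .
qed

lemma P_dcab: "(\<Sum>a\<in>G. \<Sum>b\<in>G. \<Sum>c\<in>G. \<Sum>d\<in>G. f a b c d) = (\<Sum>d\<in>G. \<Sum>c\<in>G. \<Sum>a\<in>G. \<Sum>b\<in>G. (f a b c d :: 'a::comm_monoid_add))"
proof -
  have "(\<Sum>a\<in>G. \<Sum>b\<in>G. \<Sum>c\<in>G. \<Sum>d\<in>G. f a b c d) = (\<Sum>a\<in>G. \<Sum>b\<in>G. \<Sum>d\<in>G. \<Sum>c\<in>G. f a b c d)"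
    by (intro sum.cong refl sum.swap)
  also have "\<dots> = (\<Sum>a\<in>G. \<Sum>d\<in>G. \<Sum>b\<in>G. \<Sum>c\<in>G. f a b c d)"
    by (intro sum.cong refl sum.swap)
  also have "\<dots> = (\<Sum>d\<in>G. \<Sum>a\<in>G. \<Sum>b\<in>G. \<Sum>c\<in>G. f a b c d)"
    by (rule sum.swap)
  also have "\<dots> = (\<Sum>d\<in>G. \<Sum>a\<in>G. \<Sum>c\<in>G. \<Sum>b\<in>G. f a b c d)"
    by (intro sum.cong refl sum.swap)
  also have "\<dots> = (\<Sum>d\<in>G. \<Sum>c\<in>G. \<Sum>a\<in>G. \<Sum>b\<in>G. f a b c d)"
    by (intro sum.cong refl sum.swap)
  finally show ?thesis .
qed

lemma row_mem: "c i j l \<noteq> 0 \<Longrightarrow> j \<in> row c i \<and> l \<in> row c i"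
  by (auto simp: row_def)

lemma coalg_cax: "coalg c u \<Longrightarrow> cax c"
  by (simp add: coalg_def cax_def)

lemma delta_eq:
  assumes "finite F" "{i. x i \<noteq> 0} \<subseteq> F"
  shows "delta c x (j, l) = (\<Sum>i\<in>F. x i * c i j l)"
  unfolding delta_def using assms by (auto intro!: sum.mono_neutral_left)

lemma sum_nz: "(\<Sum>i\<in>G. f i) \<noteq> 0 \<Longrightarrow> \<exists>i\<in>G. f i \<noteq> 0"
  using sum.not_neutral_contains_not_neutral by blast

definition RR :: "('b \<Rightarrow> 'b \<Rightarrow> 'b \<Rightarrow> 'k::field) \<Rightarrow> ('b \<Rightarrow> 'k) \<Rightarrow> 'b set" where
  "RR c x = (\<Union>i\<in>{i. x i \<noteq> 0}. row c i)"
definition GG :: "('b \<Rightarrow> 'b \<Rightarrow> 'b \<Rightarrow> 'k::field) \<Rightarrow> ('b \<Rightarrow> 'k) \<Rightarrow> 'b set" where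
  "GG c x = {i. x i \<noteq> 0} \<union> RR c x \<union> (\<Union>n\<in>RR c x. row c n)"

lemma RR_fin: "cax c \<Longrightarrow> x \<in> Cset \<Longrightarrow> finite (RR c x)"
  unfolding RR_def cax_def by (auto simp: fsupp_Cset)
lemma GG_fin: "cax c \<Longrightarrow> x \<in> Cset \<Longrightarrow> finite (GG c x)"
  unfolding GG_def using RR_fin[of c x] by (auto simp: cax_def fsupp_Cset)
lemma GG_supp: "{i. x i \<noteq> 0} \<subseteq> GG c x" unfolding GG_def by auto
lemma RR_GG: "RR c x \<subseteq> GG c x" unfolding GG_def by auto
lemma row_RR: "x i \<noteq> 0 \<Longrightarrow> row c i \<subseteq> RR c x" unfolding RR_def by auto
lemma in_RR: "x i \<noteq> 0 \<Longrightarrow> c i j l \<noteq> 0 \<Longrightarrow> j \<in> RR c x \<and> l \<in> RR c x"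
  unfolding RR_def row_def by blast
lemma row_GG: "n \<in> RR c x \<Longrightarrow> row c n \<subseteq> GG c x" unfolding GG_def by auto

lemma delta_Cset:
  assumes "cax c" "x \<in> Cset"
  shows "delta c x \<in> Cset"
proof -
  have "{q. delta c x q \<noteq> 0} \<subseteq> RR c x \<times> RR c x"
  proof
    fix q assume "q \<in> {q. delta c x q \<noteq> 0}"
    then have "(\<Sum>i\<in>{i. x i \<noteq> 0}. x i * c i (fst q) (snd q)) \<noteq> 0"
      unfolding delta_def by (simp add: case_prod_beta')
    then obtain i where "i \<in> {i. x i \<noteq> 0}" "x i * c i (fst q) (snd q) \<noteq> 0"
      by (rule sum.not_neutral_contains_not_neutral)
    then show "q \<in> RR c x \<times> RR c x" using in_RR[of x i c "fst q" "snd q"] by (cases q) auto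
  qed
  then show ?thesis using RR_fin[OF assms] by (auto simp: fsupp_Cset intro: finite_subset)
qed

lemma delta_add:
  assumes "x \<in> Cset" "y \<in> Cset"
  shows "delta c (\<lambda>i. x i + y i) = (\<lambda>q. delta c x q + delta c y q)"
proof
  fix q :: "'a \<times> 'a"
  obtain j l where q: "q = (j, l)" by (cases q)
  define F where "F = {i. x i \<noteq> 0} \<union> {i. y i \<noteq> 0}"
  have fin: "finite F" using assms by (auto simp: F_def fsupp_Cset)
  have "delta c (\<lambda>i. x i + y i) (j, l) = (\<Sum>i\<in>F. (x i + y i) * c i j l)"
    by (rule delta_eq[OF fin]) (auto simp: F_def)
  also have "\<dots> = (\<Sum>i\<in>F. x i * c i j l) + (\<Sum>i\<in>F. y i * c i j l)"
    by (simp add: distrib_right sum.distrib)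
  also have "\<dots> = delta c x (j, l) + delta c y (j, l)"
    using delta_eq[OF fin, of x c j l] delta_eq[OF fin, of y c j l] by (auto simp: F_def)
  finally show "delta c (\<lambda>i. x i + y i) q = delta c x q + delta c y q" using q by simp
qed

lemma fs_CC:
  fixes t :: "'a \<times> 'a \<Rightarrow> 'k::field"
  assumes "t \<in> Cset"
  shows "t \<in> tens Cset Cset"
proof -
  define I where "I = {q. t q \<noteq> 0}"
  have fin: "finite I" using assms by (simp add: I_def fsupp_Cset)
  have "t = tsum I (\<lambda>q. (\<lambda>i. t q * ev (fst q) i)) (\<lambda>q. ev (snd q))"
  proof
    fix r :: "'a \<times> 'a"
    obtain j l where r: "r = (j, l)" by (cases r)
    have "(\<Sum>q\<in>I. t q * ev (fst q) j * ev (snd q) l) = (\<Sum>q\<in>I. if q = (j, l) then t q else 0)"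
      by (intro sum.cong refl) (auto simp: ev_def)
    also have "\<dots> = t (j, l)" using fin by (simp add: I_def)
    finally show "t r = tsum I (\<lambda>q. (\<lambda>i. t q * ev (fst q) i)) (\<lambda>q. ev (snd q)) r"
      unfolding r tsum_def by simp
  qed
  moreover have "(ev m :: 'a \<Rightarrow> 'k) \<in> Cset" for m :: 'a
  proof -
    have "{i. ev m i \<noteq> (0::'k)} \<subseteq> {m}" by (auto simp: ev_def)
    then have "finite {i. ev m i \<noteq> (0::'k)}" by (rule finite_subset) simp
    then show ?thesis by (simp add: fsupp_Cset)
  qed
  ultimately show ?thesis
    using tsum_tens[OF fin, of "\<lambda>q. (\<lambda>i. t q * ev (fst q) i)" Cset "\<lambda>q. ev (snd q)" Cset]
      ls_scale[OF ls_Cset] by metis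
qed

lemma counit_R:
  assumes cu: "coalg c u" and x: "x \<in> Cset"
  shows "rc (delta c x) u = x"
proof
  fix j
  have ax: "cax c" using cu by (rule coalg_cax)
  let ?R = "RR c x" and ?F = "{i. x i \<noteq> 0}"
  have finR: "finite ?R" using RR_fin[OF ax x] .
  have finF: "finite ?F" using x by (simp add: fsupp_Cset)
  have dx: "delta c x (j, l) = (\<Sum>i\<in>?F. x i * c i j l)" for l by (rule delta_eq[OF finF]) auto
  have "rc (delta c x) u j = (\<Sum>l\<in>?R. u l * delta c x (j, l))"
    unfolding rc_def
  proof (rule pr_eq[OF finR], rule)
    fix l assume "l \<in> {l. delta c x (j, l) \<noteq> 0}"
    then have "(\<Sum>i\<in>?F. x i * c i j l) \<noteq> 0" using dx by simp
    then obtain i where "i \<in> ?F" "x i * c i j l \<noteq> 0" by (rule sum.not_neutral_contains_not_neutral)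
    then show "l \<in> ?R" using in_RR[of x i c j l] by auto
  qed
  also have "\<dots> = (\<Sum>l\<in>?R. \<Sum>i\<in>?F. x i * (c i j l * u l))"
    by (simp add: dx sum_distrib_left mult_ac)
  also have "\<dots> = (\<Sum>i\<in>?F. \<Sum>l\<in>?R. x i * (c i j l * u l))"
    by (rule sum.swap)
  also have "\<dots> = (\<Sum>i\<in>?F. x i * (\<Sum>l\<in>?R. c i j l * u l))"
    by (simp add: sum_distrib_left)
  also have "\<dots> = (\<Sum>i\<in>?F. x i * (if j = i then 1 else 0))"
  proof (intro sum.cong refl arg_cong2[where f="(*)"])
    fix i assume i: "i \<in> ?F"
    have "(\<Sum>l\<in>?R. c i j l * u l) = (\<Sum>l\<in>row c i. c i j l * u l)"
      using row_RR[of x i c] i finR by (intro sum.mono_neutral_right) (auto simp: row_def)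
    also have "\<dots> = (if j = i then 1 else 0)" using cu by (simp add: coalg_def)
    finally show "(\<Sum>l\<in>?R. c i j l * u l) = (if j = i then 1 else 0)" .
  qed
  also have "\<dots> = x j" using finF by (simp add: if_distrib[of "\<lambda>z. _ * z"] cong: if_cong) 
  finally show "rc (delta c x) u j = x j" .
qed

lemma counit_L:
  assumes cu: "coalg c u" and x: "x \<in> Cset"
  shows "lc u (delta c x) = x"
proof
  fix l
  have ax: "cax c" using cu by (rule coalg_cax)
  let ?R = "RR c x" and ?F = "{i. x i \<noteq> 0}"
  have finR: "finite ?R" using RR_fin[OF ax x] .
  have finF: "finite ?F" using x by (simp add: fsupp_Cset)
  have dx: "delta c x (j, l) = (\<Sum>i\<in>?F. x i * c i j l)" for j by (rule delta_eq[OF finF]) auto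
  have "lc u (delta c x) l = (\<Sum>j\<in>?R. u j * delta c x (j, l))"
    unfolding lc_def rc_def swp_def
  proof (simp, rule pr_eq[OF finR], rule)
    fix j assume "j \<in> {j. delta c x (j, l) \<noteq> 0}"
    then have "(\<Sum>i\<in>?F. x i * c i j l) \<noteq> 0" using dx by simp
    then obtain i where "i \<in> ?F" "x i * c i j l \<noteq> 0" by (rule sum.not_neutral_contains_not_neutral)
    then show "j \<in> ?R" using in_RR[of x i c j l] by auto
  qed
  also have "\<dots> = (\<Sum>j\<in>?R. \<Sum>i\<in>?F. x i * (u j * c i j l))"
    by (simp add: dx sum_distrib_left mult_ac)
  also have "\<dots> = (\<Sum>i\<in>?F. \<Sum>j\<in>?R. x i * (u j * c i j l))"
    by (rule sum.swap)
  also have "\<dots> = (\<Sum>i\<in>?F. x i * (\<Sum>j\<in>?R. u j * c i j l))"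
    by (simp add: sum_distrib_left)
  also have "\<dots> = (\<Sum>i\<in>?F. x i * (if l = i then 1 else 0))"
  proof (intro sum.cong refl arg_cong2[where f="(*)"])
    fix i assume i: "i \<in> ?F"
    have "(\<Sum>j\<in>?R. u j * c i j l) = (\<Sum>j\<in>row c i. u j * c i j l)"
      using row_RR[of x i c] i finR by (intro sum.mono_neutral_right) (auto simp: row_def)
    also have "\<dots> = (if l = i then 1 else 0)" using cu by (simp add: coalg_def)
    finally show "(\<Sum>j\<in>?R. u j * c i j l) = (if l = i then 1 else 0)" .
  qed
  also have "\<dots> = x l" using finF by (simp add: if_distrib[of "\<lambda>z. _ * z"] cong: if_cong) 
  finally show "lc u (delta c x) l = x l" .
qed


lemma rcd_eq:
  fixes c :: "'b \<Rightarrow> 'b \<Rightarrow> 'b \<Rightarrow> 'k::field"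
  assumes ax: "cax c" and x: "x \<in> Cset"
  shows "rc (delta c x) p m = (\<Sum>l\<in>GG c x. p l * (\<Sum>i\<in>GG c x. x i * c i m l))"
proof -
  let ?G = "GG c x"
  have finG: "finite ?G" by (rule GG_fin[OF ax x])
  have dx: "delta c x (j, l) = (\<Sum>i\<in>?G. x i * c i j l)" for j l by (rule delta_eq[OF finG GG_supp])
  have "rc (delta c x) p m = pr p (\<lambda>l. delta c x (m, l))" by (simp add: rc_def)
  also have "\<dots> = (\<Sum>l\<in>?G. p l * delta c x (m, l))"
  proof (rule pr_eq[OF finG], rule)
    fix l assume "l \<in> {l. delta c x (m, l) \<noteq> 0}"
    then have "(\<Sum>i\<in>?G. x i * c i m l) \<noteq> 0" using dx by simp
    then obtain i where "i \<in> ?G" "x i * c i m l \<noteq> 0" by (rule sum.not_neutral_contains_not_neutral)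
    then show "l \<in> ?G" using in_RR[of x i c m l] RR_GG[of c x] by auto
  qed
  finally show ?thesis by (simp add: dx)
qed

lemma rcd_supp:
  fixes c :: "'b \<Rightarrow> 'b \<Rightarrow> 'b \<Rightarrow> 'k::field"
  assumes ax: "cax c" and x: "x \<in> Cset"
  shows "{m. rc (delta c x) p m \<noteq> 0} \<subseteq> RR c x"
proof
  let ?G = "GG c x"
  fix m assume "m \<in> {m. rc (delta c x) p m \<noteq> 0}"
  then have "(\<Sum>l\<in>?G. p l * (\<Sum>i\<in>?G. x i * c i m l)) \<noteq> 0" using rcd_eq[OF ax x] by simp
  then obtain l where "l \<in> ?G" "p l * (\<Sum>i\<in>?G. x i * c i m l) \<noteq> 0" by (rule sum.not_neutral_contains_not_neutral)
  then have "(\<Sum>i\<in>?G. x i * c i m l) \<noteq> 0" by auto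
  then obtain i where "i \<in> ?G" "x i * c i m l \<noteq> 0" by (rule sum.not_neutral_contains_not_neutral)
  then show "m \<in> RR c x" using in_RR[of x i c m l] by auto
qed

lemma lcd_eq:
  fixes c :: "'b \<Rightarrow> 'b \<Rightarrow> 'b \<Rightarrow> 'k::field"
  assumes ax: "cax c" and x: "x \<in> Cset"
  shows "lc f (delta c x) n = (\<Sum>j\<in>GG c x. f j * (\<Sum>i\<in>GG c x. x i * c i j n))"
proof -
  let ?G = "GG c x"
  have finG: "finite ?G" by (rule GG_fin[OF ax x])
  have dx: "delta c x (j, l) = (\<Sum>i\<in>?G. x i * c i j l)" for j l by (rule delta_eq[OF finG GG_supp])
  have "lc f (delta c x) n = pr f (\<lambda>j. delta c x (j, n))" by (simp add: lc_def rc_def swp_def)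
  also have "\<dots> = (\<Sum>j\<in>?G. f j * delta c x (j, n))"
  proof (rule pr_eq[OF finG], rule)
    fix j assume "j \<in> {j. delta c x (j, n) \<noteq> 0}"
    then have "(\<Sum>i\<in>?G. x i * c i j n) \<noteq> 0" using dx by simp
    then obtain i where "i \<in> ?G" "x i * c i j n \<noteq> 0" by (rule sum.not_neutral_contains_not_neutral)
    then show "j \<in> ?G" using in_RR[of x i c j n] RR_GG[of c x] by auto
  qed
  finally show ?thesis by (simp add: dx)
qed

lemma lcd_supp:
  fixes c :: "'b \<Rightarrow> 'b \<Rightarrow> 'b \<Rightarrow> 'k::field"
  assumes ax: "cax c" and x: "x \<in> Cset"
  shows "{n. lc f (delta c x) n \<noteq> 0} \<subseteq> RR c x"
proof
  let ?G = "GG c x"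
  fix n assume "n \<in> {n. lc f (delta c x) n \<noteq> 0}"
  then have "(\<Sum>j\<in>?G. f j * (\<Sum>i\<in>?G. x i * c i j n)) \<noteq> 0" using lcd_eq[OF ax x] by simp
  then obtain j where "j \<in> ?G" "f j * (\<Sum>i\<in>?G. x i * c i j n) \<noteq> 0" by (rule sum.not_neutral_contains_not_neutral)
  then have "(\<Sum>i\<in>?G. x i * c i j n) \<noteq> 0" by auto
  then obtain i where "i \<in> ?G" "x i * c i j n \<noteq> 0" by (rule sum.not_neutral_contains_not_neutral)
  then show "n \<in> RR c x" using in_RR[of x i c j n] by auto
qed

lemma d2_eq:
  fixes c :: "'b \<Rightarrow> 'b \<Rightarrow> 'b \<Rightarrow> 'k::field"
  assumes ax: "cax c" and x: "x \<in> Cset" and ys: "{m. y m \<noteq> 0} \<subseteq> RR c x"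
  shows "rc (delta c y) q a = (\<Sum>b\<in>GG c x. q b * (\<Sum>m\<in>GG c x. y m * c m a b))"
    and "lc f (delta c y) b = (\<Sum>a\<in>GG c x. f a * (\<Sum>m\<in>GG c x. y m * c m a b))"
proof -
  let ?G = "GG c x" and ?R = "RR c x"
  have finG: "finite ?G" by (rule GG_fin[OF ax x])
  have dy: "delta c y (a', b') = (\<Sum>m\<in>?G. y m * c m a' b')" for a' b'
    by (rule delta_eq[OF finG subset_trans[OF ys RR_GG]])
  have "rc (delta c y) q a = pr q (\<lambda>b. delta c y (a, b))" by (simp add: rc_def)
  also have "\<dots> = (\<Sum>b\<in>?G. q b * delta c y (a, b))"
  proof (rule pr_eq[OF finG], rule)
    fix b assume "b \<in> {b. delta c y (a, b) \<noteq> 0}"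
    then have "(\<Sum>m\<in>?G. y m * c m a b) \<noteq> 0" using dy by simp
    then obtain m where "m \<in> ?G" "y m * c m a b \<noteq> 0" by (rule sum.not_neutral_contains_not_neutral)
    then have "m \<in> ?R" "c m a b \<noteq> 0" using ys by auto
    then show "b \<in> ?G" using row_mem[of c m a b] row_GG[of m c x] by auto
  qed
  finally show "rc (delta c y) q a = (\<Sum>b\<in>GG c x. q b * (\<Sum>m\<in>GG c x. y m * c m a b))" by (simp add: dy)
  have "lc f (delta c y) b = pr f (\<lambda>a. delta c y (a, b))" by (simp add: lc_def rc_def swp_def)
  also have "\<dots> = (\<Sum>a\<in>?G. f a * delta c y (a, b))"
  proof (rule pr_eq[OF finG], rule)
    fix a assume "a \<in> {a. delta c y (a, b) \<noteq> 0}"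
    then have "(\<Sum>m\<in>?G. y m * c m a b) \<noteq> 0" using dy by simp
    then obtain m where "m \<in> ?G" "y m * c m a b \<noteq> 0" by (rule sum.not_neutral_contains_not_neutral)
    then have "m \<in> ?R" "c m a b \<noteq> 0" using ys by auto
    then show "a \<in> ?G" using row_mem[of c m a b] row_GG[of m c x] by auto
  qed
  finally show "lc f (delta c y) b = (\<Sum>a\<in>GG c x. f a * (\<Sum>m\<in>GG c x. y m * c m a b))" by (simp add: dy)
qed

lemma cvm_eq:
  fixes c :: "'b \<Rightarrow> 'b \<Rightarrow> 'b \<Rightarrow> 'k::field"
  assumes finG: "finite G" and m: "row c m \<subseteq> G"
  shows "cv c q p m = (\<Sum>b\<in>G. q b * (\<Sum>l\<in>G. p l * c m b l))"
proof -
  have fm: "finite {m}" by simp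
  have dm: "delta c (ev m) (b, l) = c m b l" for b l
    using delta_eq[OF fm, of "ev m" c b l] by (auto simp: ev_def)
  have r: "rc (delta c (ev m)) p b = (\<Sum>l\<in>G. p l * c m b l)" for b
    unfolding rc_def dm
    by (rule pr_eq[OF finG]) (use row_mem[of c m b] m in auto)
  have "cv c q p m = pr q (\<lambda>b. \<Sum>l\<in>G. p l * c m b l)" unfolding cv_def r ..
  also have "\<dots> = (\<Sum>b\<in>G. q b * (\<Sum>l\<in>G. p l * c m b l))"
  proof (rule pr_eq[OF finG], rule)
    fix b assume "b \<in> {b. (\<Sum>l\<in>G. p l * c m b l) \<noteq> 0}"
    then have "(\<Sum>l\<in>G. p l * c m b l) \<noteq> 0" by simp
    then obtain l where "l \<in> G" "p l * c m b l \<noteq> 0" by (rule sum.not_neutral_contains_not_neutral)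
    then show "b \<in> G" using row_mem[of c m b l] m by auto
  qed
  finally show ?thesis .
qed

lemma coas:
  fixes c :: "'b \<Rightarrow> 'b \<Rightarrow> 'b \<Rightarrow> 'k::field"
  assumes ax: "cax c" and x: "x \<in> Cset"
  shows "x i * (\<Sum>m\<in>GG c x. c i m l * c m a b) = x i * (\<Sum>m\<in>GG c x. c i a m * c m b l)"
proof (cases "x i = 0")
  case True then show ?thesis by simp
next
  case False
  have sub: "row c i \<subseteq> GG c x" using row_RR[of x i c, OF False] RR_GG[of c x] by blast
  have finG: "finite (GG c x)" by (rule GG_fin[OF ax x])
  have "(\<Sum>m\<in>GG c x. c i m l * c m a b) = (\<Sum>m\<in>row c i. c i m l * c m a b)"
    using sub finG by (intro sum.mono_neutral_right) (auto simp: row_def)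
  also have "\<dots> = (\<Sum>m\<in>row c i. c i a m * c m b l)" using ax by (simp add: cax_def)
  also have "\<dots> = (\<Sum>m\<in>GG c x. c i a m * c m b l)"
    using sub finG by (intro sum.mono_neutral_left) (auto simp: row_def)
  finally show ?thesis by simp
qed

lemma ID_R:
  fixes c :: "'b \<Rightarrow> 'b \<Rightarrow> 'b \<Rightarrow> 'k::field"
  assumes ax: "cax c" and x: "x \<in> Cset"
  shows "rc (delta c (rc (delta c x) p)) q = rc (delta c x) (cv c q p)"
proof
  fix a
  let ?G = "GG c x" and ?R = "RR c x"
  have finG: "finite ?G" by (rule GG_fin[OF ax x])
  have dx: "delta c x (j, l) = (\<Sum>i\<in>?G. x i * c i j l)" for j l by (rule delta_eq[OF finG GG_supp])
  define y where "y = rc (delta c x) p"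
  have y: "y m = (\<Sum>l\<in>?G. p l * (\<Sum>i\<in>?G. x i * c i m l))" for m
    unfolding y_def by (rule rcd_eq[OF ax x])
  have "rc (delta c y) q a = (\<Sum>b\<in>?G. q b * (\<Sum>m\<in>?G. y m * c m a b))"
    by (rule d2_eq(1)[OF ax x]) (unfold y_def, rule rcd_supp[OF ax x])
  also have "\<dots> = (\<Sum>b\<in>?G. \<Sum>m\<in>?G. \<Sum>l\<in>?G. \<Sum>i\<in>?G. q b * (p l * (x i * (c i m l * c m a b))))"
    by (simp add: y sum_distrib_left sum_distrib_right mult_ac)
  also have "\<dots> = (\<Sum>i\<in>?G. \<Sum>b\<in>?G. \<Sum>l\<in>?G. \<Sum>m\<in>?G. q b * (p l * (x i * (c i m l * c m a b))))"
    by (rule P_dacb)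
  also have "\<dots> = (\<Sum>i\<in>?G. \<Sum>b\<in>?G. \<Sum>l\<in>?G. q b * (p l * (x i * (\<Sum>m\<in>?G. c i m l * c m a b))))"
    by (simp add: sum_distrib_left)
  also have "\<dots> = (\<Sum>i\<in>?G. \<Sum>b\<in>?G. \<Sum>l\<in>?G. q b * (p l * (x i * (\<Sum>m\<in>?G. c i a m * c m b l))))"
    by (simp only: coas[OF ax x])
  also have "\<dots> = (\<Sum>i\<in>?G. \<Sum>b\<in>?G. \<Sum>l\<in>?G. \<Sum>m\<in>?G. q b * (p l * (x i * (c i a m * c m b l))))"
    by (simp add: sum_distrib_left)
  also have "\<dots> = (\<Sum>m\<in>?G. \<Sum>b\<in>?G. \<Sum>l\<in>?G. \<Sum>i\<in>?G. q b * (p l * (x i * (c i a m * c m b l))))"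
    by (rule P_dbca[symmetric])
  also have "\<dots> = (\<Sum>m\<in>?G. (\<Sum>b\<in>?G. q b * (\<Sum>l\<in>?G. p l * c m b l)) * (\<Sum>i\<in>?G. x i * c i a m))"
    by (simp add: sum_distrib_left sum_distrib_right mult_ac)
  also have "\<dots> = (\<Sum>m\<in>?G. cv c q p m * delta c x (a, m))"
  proof (rule sum.cong[OF refl])
    fix m assume mG: "m \<in> ?G"
    show "(\<Sum>b\<in>?G. q b * (\<Sum>l\<in>?G. p l * c m b l)) * (\<Sum>i\<in>?G. x i * c i a m) = cv c q p m * delta c x (a, m)"
    proof (cases "m \<in> ?R")
      case True
      then show ?thesis using cvm_eq[OF finG row_GG[OF True]] dx by simp
    next
      case False
      have "x i * c i a m = 0" for i using in_RR[of x i c a m] False by auto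
      then have "(\<Sum>i\<in>?G. x i * c i a m) = 0" by (intro sum.neutral) simp
      then show ?thesis using dx[of a m] by simp
    qed
  qed
  also have "\<dots> = rc (delta c x) (cv c q p) a"
    unfolding rc_def
  proof (rule pr_eq[symmetric, OF finG], rule)
    fix m assume "m \<in> {m. delta c x (a, m) \<noteq> 0}"
    then have "(\<Sum>i\<in>?G. x i * c i a m) \<noteq> 0" using dx by simp
    then obtain i where "i \<in> ?G" "x i * c i a m \<noteq> 0" by (rule sum.not_neutral_contains_not_neutral)
    then show "m \<in> ?G" using in_RR[of x i c a m] RR_GG[of c x] by auto
  qed
  finally show "rc (delta c (rc (delta c x) p)) q a = rc (delta c x) (cv c q p) a" unfolding y_def .
qed


lemma ID_M:
  fixes c :: "'b \<Rightarrow> 'b \<Rightarrow> 'b \<Rightarrow> 'k::field"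
  assumes ax: "cax c" and x: "x \<in> Cset"
  shows "rc (delta c (lc f (delta c x))) g = lc f (delta c (rc (delta c x) g))"
proof
  fix b
  let ?G = "GG c x" and ?R = "RR c x"
  define y where "y = lc f (delta c x)"
  define z where "z = rc (delta c x) g"
  have y: "y n = (\<Sum>j\<in>?G. f j * (\<Sum>i\<in>?G. x i * c i j n))" for n
    unfolding y_def by (rule lcd_eq[OF ax x])
  have z: "z n = (\<Sum>m\<in>?G. g m * (\<Sum>i\<in>?G. x i * c i n m))" for n
    unfolding z_def by (rule rcd_eq[OF ax x])
  have "rc (delta c y) g b = (\<Sum>m\<in>?G. g m * (\<Sum>n\<in>?G. y n * c n b m))"
    by (rule d2_eq(1)[OF ax x]) (unfold y_def, rule lcd_supp[OF ax x])
  also have "\<dots> = (\<Sum>m\<in>?G. \<Sum>n\<in>?G. \<Sum>j\<in>?G. \<Sum>i\<in>?G. f j * (g m * (x i * (c i j n * c n b m))))"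
    by (simp add: y sum_distrib_left sum_distrib_right mult_ac)
  also have "\<dots> = (\<Sum>i\<in>?G. \<Sum>j\<in>?G. \<Sum>m\<in>?G. \<Sum>n\<in>?G. f j * (g m * (x i * (c i j n * c n b m))))"
    by (rule P_dcab)
  also have "\<dots> = (\<Sum>i\<in>?G. \<Sum>j\<in>?G. \<Sum>m\<in>?G. f j * (g m * (x i * (\<Sum>n\<in>?G. c i j n * c n b m))))"
    by (simp add: sum_distrib_left)
  also have "\<dots> = (\<Sum>i\<in>?G. \<Sum>j\<in>?G. \<Sum>m\<in>?G. f j * (g m * (x i * (\<Sum>n\<in>?G. c i n m * c n j b))))"
    by (simp only: coas[OF ax x, symmetric])
  also have "\<dots> = (\<Sum>i\<in>?G. \<Sum>j\<in>?G. \<Sum>m\<in>?G. \<Sum>n\<in>?G. f j * (g m * (x i * (c i n m * c n j b))))"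
    by (simp add: sum_distrib_left)
  also have "\<dots> = (\<Sum>j\<in>?G. \<Sum>n\<in>?G. \<Sum>m\<in>?G. \<Sum>i\<in>?G. f j * (g m * (x i * (c i n m * c n j b))))"
    by (rule P_dacb[symmetric])
  also have "\<dots> = (\<Sum>j\<in>?G. f j * (\<Sum>n\<in>?G. z n * c n j b))"
    by (simp add: z sum_distrib_left sum_distrib_right mult_ac)
  also have "\<dots> = lc f (delta c z) b"
    by (rule d2_eq(2)[OF ax x, symmetric]) (unfold z_def, rule rcd_supp[OF ax x])
  finally show "rc (delta c (lc f (delta c x))) g b = lc f (delta c (rc (delta c x) g)) b"
    unfolding y_def z_def .
qed

lemma LINCV:
  fixes c :: "'b \<Rightarrow> 'b \<Rightarrow> 'b \<Rightarrow> 'k::field"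
  assumes ax: "cax c" and x: "x \<in> Cset"
  shows "pr (cv c q p) x = pr q (rc (delta c x) p)"
proof -
  let ?G = "GG c x" and ?R = "RR c x"
  have finG: "finite ?G" by (rule GG_fin[OF ax x])
  have "pr (cv c q p) x = (\<Sum>m\<in>?G. cv c q p m * x m)"
    by (rule pr_eq[OF finG GG_supp])
  also have "\<dots> = (\<Sum>m\<in>?G. (\<Sum>b\<in>?G. q b * (\<Sum>l\<in>?G. p l * c m b l)) * x m)"
  proof (rule sum.cong[OF refl])
    fix m assume "m \<in> ?G"
    show "cv c q p m * x m = (\<Sum>b\<in>?G. q b * (\<Sum>l\<in>?G. p l * c m b l)) * x m"
    proof (cases "x m = 0")
      case False
      have rm: "row c m \<subseteq> ?G" using row_RR[of x m c, OF False] RR_GG[of c x] by blast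
      show ?thesis using cvm_eq[OF finG rm, of q p] by simp
    qed simp
  qed
  also have "\<dots> = (\<Sum>m\<in>?G. \<Sum>b\<in>?G. \<Sum>l\<in>?G. q b * (p l * (x m * c m b l)))"
    by (simp add: sum_distrib_left sum_distrib_right mult_ac)
  also have "\<dots> = (\<Sum>b\<in>?G. \<Sum>m\<in>?G. \<Sum>l\<in>?G. q b * (p l * (x m * c m b l)))"
    by (rule sum.swap)
  also have "\<dots> = (\<Sum>b\<in>?G. \<Sum>l\<in>?G. \<Sum>m\<in>?G. q b * (p l * (x m * c m b l)))"
    by (intro sum.cong refl sum.swap)
  also have "\<dots> = (\<Sum>b\<in>?G. q b * rc (delta c x) p b)"
    by (simp add: rcd_eq[OF ax x] sum_distrib_left mult_ac)
  also have "\<dots> = pr q (rc (delta c x) p)"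
    by (rule pr_eq[symmetric, OF finG subset_trans[OF rcd_supp[OF ax x] RR_GG]])
  finally show ?thesis .
qed

definition cop :: "('b \<Rightarrow> 'b \<Rightarrow> 'b \<Rightarrow> 'k::field) \<Rightarrow> ('b \<Rightarrow> 'b \<Rightarrow> 'b \<Rightarrow> 'k)" where
  "cop c = (\<lambda>i j l. c i l j)"

lemma row_cop: "row (cop c) i = row c i"
  unfolding row_def cop_def by auto

lemma cax_cop: "cax c \<Longrightarrow> cax (cop c)"
  unfolding cax_def row_cop by (auto simp: cop_def mult.commute)

lemma delta_cop: "delta (cop c) x = swp (delta c x)"
  unfolding delta_def swp_def cop_def by (auto simp: fun_eq_iff)

lemma tens_zero_r: "tens X {zerov} = {zerov}"
proof
  have "{\<lambda>(j, l). x j * y l |x y. x \<in> X \<and> y \<in> {zerov}} \<subseteq> {zerov}"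
    by (auto simp: zerov_def)
  then show "tens X {zerov} \<subseteq> {zerov}" unfolding tens_def by (rule span_min[OF ls_zero_set])
  show "{zerov} \<subseteq> tens X {zerov}" using ls_zero[OF ls_tens] by blast
qed

lemma tens_zero_l: "tens {zerov} Y = {zerov}"
proof
  have "{\<lambda>(j, l). x j * y l |x y. x \<in> {zerov} \<and> y \<in> Y} \<subseteq> {zerov}"
    by (auto simp: zerov_def)
  then show "tens {zerov} Y \<subseteq> {zerov}" unfolding tens_def by (rule span_min[OF ls_zero_set])
  show "{zerov} \<subseteq> tens {zerov} Y" using ls_zero[OF ls_tens] by blast
qed

lemma zero_Int: "lin_subspace V \<Longrightarrow> {zerov} \<inter> V = {zerov}"
  using ls_zero by blast

lemma perp_zero: "perp p {zerov}" by (simp add: perp_def)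

lemma delta_zero: "delta c zerov = zerov"
  unfolding delta_def zerov_def by (auto simp: fun_eq_iff)

lemma delta_scale:
  assumes "x \<in> Cset"
  shows "delta c (\<lambda>i. a * x i) = (\<lambda>q. a * delta c x q)"
proof
  fix q :: "'a \<times> 'a"
  obtain j l where q: "q = (j, l)" by (cases q)
  define F where "F = {i. x i \<noteq> 0}"
  have fin: "finite F" using assms by (auto simp: F_def fsupp_Cset)
  have "delta c (\<lambda>i. a * x i) (j, l) = (\<Sum>i\<in>F. (a * x i) * c i j l)"
    by (rule delta_eq[OF fin]) (auto simp: F_def)
  also have "\<dots> = a * (\<Sum>i\<in>F. x i * c i j l)" by (simp add: sum_distrib_left mult_ac)
  also have "\<dots> = a * delta c x (j, l)" using delta_eq[OF fin, of x c j l] by (simp add: F_def)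
  finally show "delta c (\<lambda>i. a * x i) q = a * delta c x q" using q by simp
qed

lemma ls_wedge:
  assumes "lin_subspace W" "W \<subseteq> Cset"
  shows "lin_subspace (wedge c W X Y)"
proof -
  have S: "lin_subspace (ssum (tens X W) (tens W Y))" by (intro ls_ssum ls_tens)
  show ?thesis unfolding lin_subspace_def wedge_def
  proof (intro conjI ballI allI)
    show "zerov \<in> {x \<in> W. delta c x \<in> ssum (tens X W) (tens W Y)}"
      using ls_zero[OF assms(1)] ls_zero[OF S] by (simp add: delta_zero)
  next
    fix x y assume x: "x \<in> {x \<in> W. delta c x \<in> ssum (tens X W) (tens W Y)}"
      and y: "y \<in> {x \<in> W. delta c x \<in> ssum (tens X W) (tens W Y)}"
    have "delta c (\<lambda>i. x i + y i) = (\<lambda>q. delta c x q + delta c y q)"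
      by (rule delta_add) (use x y assms(2) in auto)
    then show "(\<lambda>i. x i + y i) \<in> {x \<in> W. delta c x \<in> ssum (tens X W) (tens W Y)}"
      using x y ls_add[OF assms(1)] ls_add[OF S] by auto
  next
    fix a x assume x: "x \<in> {x \<in> W. delta c x \<in> ssum (tens X W) (tens W Y)}"
    have "delta c (\<lambda>i. a * x i) = (\<lambda>q. a * delta c x q)"
      by (rule delta_scale) (use x assms(2) in auto)
    then show "(\<lambda>i. a * x i) \<in> {x \<in> W. delta c x \<in> ssum (tens X W) (tens W Y)}"
      using x ls_scale[OF assms(1)] ls_scale[OF S] by auto
  qed
qed

lemma wedge_sub: "wedge c W X Y \<subseteq> W" unfolding wedge_def by auto

lemma subcoalg_ls: "subcoalg c A \<Longrightarrow> lin_subspace A" by (simp add: subcoalg_def)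
lemma subcoalg_C: "subcoalg c A \<Longrightarrow> A \<subseteq> Cset" by (simp add: subcoalg_def)
lemma subcoalg_d: "subcoalg c A \<Longrightarrow> x \<in> A \<Longrightarrow> delta c x \<in> tens A A" by (simp add: subcoalg_def)

lemma subcoalg_Int:
  assumes S: "subcoalg c S" and A: "subcoalg c A"
  shows "subcoalg c (S \<inter> A)"
proof -
  have lS: "lin_subspace S" and lA: "lin_subspace A" and CS: "S \<subseteq> Cset" and CA: "A \<subseteq> Cset"
    using S A by (auto simp: subcoalg_def)
  have lSA: "lin_subspace (A \<inter> S)" by (rule ls_Int[OF lA lS])
  have "delta c x \<in> tens (S \<inter> A) (S \<inter> A)" if x: "x \<in> S \<inter> A" for x
  proof -
    have tS: "delta c x \<in> tens S S" and tA: "delta c x \<in> tens A A"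
      using x S A by (auto simp: subcoalg_def)
    have "delta c x \<in> ssum (tens (A \<inter> S) S) (tens S ({zerov} \<inter> S))"
      by (rule CORE[OF lS lS lA ls_zero_set CS CS _ tS]) (use rc_tens[OF tA lA CA] ls_zero[OF ls_Cset] in auto)
    then have t1: "delta c x \<in> tens (A \<inter> S) S"
      unfolding zero_Int[OF lS] tens_zero_r ssum_zero[OF ls_tens] .
    have "delta c x \<in> ssum (tens (A \<inter> S) (A \<inter> S)) (tens ({zerov} \<inter> (A \<inter> S)) S)"
      by (rule CORE_L[OF lSA lS lA ls_zero_set _ CS _ t1]) (use CS CA lc_tens[OF tA lA CA lA] ls_zero[OF ls_Cset] in auto)
    then have "delta c x \<in> tens (A \<inter> S) (A \<inter> S)"
      unfolding zero_Int[OF lSA] tens_zero_l ssum_zero[OF ls_tens] .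
    then show ?thesis by (simp add: Int_commute)
  qed
  then show ?thesis using ls_Int[OF lS lA] CS by (auto simp: subcoalg_def)
qed

lemma simple_dich:
  assumes "simple_subcoalg c S" "subcoalg c A"
  shows "S \<subseteq> A \<or> S \<inter> A = {zerov}"
proof -
  have "subcoalg c (S \<inter> A)" using assms subcoalg_Int by (auto simp: simple_subcoalg_def)
  then have "S \<inter> A = {zerov} \<or> S \<inter> A = S" using assms(1) unfolding simple_subcoalg_def by blast
  then show ?thesis by blast
qed


lemma rc_zerov[simp]: "rc zerov p = zerov"
  by (simp add: rc_def zerov_def fun_eq_iff pr_def)

context
  fixes c :: "'b \<Rightarrow> 'b \<Rightarrow> 'b \<Rightarrow> 'k::field" and u :: "'b \<Rightarrow> 'k" and A B :: "('b \<Rightarrow> 'k) set"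
  assumes cu: "coalg c u" and sA: "subcoalg c A" and sB: "subcoalg c B"
begin

abbreviation "D \<equiv> wedge c Cset A B"

lemma ax: "cax c" using cu by (rule coalg_cax)
lemma lA: "lin_subspace A" using sA by (rule subcoalg_ls)
lemma lB: "lin_subspace B" using sB by (rule subcoalg_ls)
lemma CA: "A \<subseteq> Cset" using sA by (rule subcoalg_C)
lemma CB: "B \<subseteq> Cset" using sB by (rule subcoalg_C)
lemma lD: "lin_subspace D" by (rule ls_wedge[OF ls_Cset subset_refl])
lemma CD: "D \<subseteq> Cset" by (rule wedge_sub)
lemma lC: "lin_subspace (Cset :: ('b \<Rightarrow> 'k) set)" by (rule ls_Cset)

lemma D_iff: "x \<in> D \<longleftrightarrow> x \<in> Cset \<and> delta c x \<in> ssum (tens A Cset) (tens Cset B)"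
  by (simp add: wedge_def)

lemma A_D: "A \<subseteq> D"
proof
  fix x assume x: "x \<in> A"
  have "delta c x \<in> tens A Cset" using subcoalg_d[OF sA x] tens_mono[OF subset_refl CA] by blast
  then have "delta c x \<in> ssum (tens A Cset) (tens Cset B)" using ssum_left[OF ls_zero[OF ls_tens]] by blast
  then show "x \<in> D" using x CA by (auto simp: D_iff)
qed

lemma B_D: "B \<subseteq> D"
proof
  fix x assume x: "x \<in> B"
  have "delta c x \<in> tens Cset B" using subcoalg_d[OF sB x] tens_mono[OF CB subset_refl] by blast
  then have "delta c x \<in> ssum (tens A Cset) (tens Cset B)" using ssum_right[OF ls_zero[OF ls_tens]] by blast
  then show "x \<in> D" using x CB by (auto simp: D_iff)
qed

lemma rc_D: "x \<in> D \<Longrightarrow> perp p B \<Longrightarrow> rc (delta c x) p \<in> A"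
  using rc_ssum[of "delta c x" A Cset Cset B p] lA CA CB lC by (auto simp: D_iff)

lemma lc_D: "x \<in> D \<Longrightarrow> perp p A \<Longrightarrow> lc p (delta c x) \<in> B"
  using lc_ssum[of "delta c x" A Cset Cset B p] lA lB CA CB lC by (auto simp: D_iff)

lemma SUB:
  assumes xD: "x \<in> D"
  shows "delta c x \<in> tens D D"
proof -
  have xC: "x \<in> Cset" using xD by (simp add: D_iff)
  have dC: "delta c x \<in> Cset" by (rule delta_Cset[OF ax xC])
  have step1: "rc (delta c x) p \<in> D" for p
  proof -
    define y where "y = rc (delta c x) p"
    have yC: "y \<in> Cset" unfolding y_def by (rule rc_Cset[OF dC])
    have "delta c y \<in> ssum (tens (A \<inter> Cset) Cset) (tens Cset (B \<inter> Cset))"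
    proof (rule CORE[OF lC lC lA lB subset_refl subset_refl CB fs_CC[OF delta_Cset[OF ax yC]]], intro allI impI)
      fix q assume pq: "perp q B"
      have "rc (delta c y) q = rc (delta c x) (cv c q p)" unfolding y_def by (rule ID_R[OF ax xC])
      moreover have "perp (cv c q p) B" unfolding perp_def
      proof
        fix b assume b: "b \<in> B"
        have bC: "b \<in> Cset" using b CB by blast
        have "rc (delta c b) p \<in> B" by (rule rc_tens[OF subcoalg_d[OF sB b] lB CB])
        then show "pr (cv c q p) b = 0" using LINCV[OF ax bC] pq by (simp add: perp_def)
      qed
      ultimately show "rc (delta c y) q \<in> A" using rc_D[OF xD] by simp
    qed
    then have "delta c y \<in> ssum (tens A Cset) (tens Cset B)" using CA CB by (simp add: Int_absorb2)
    then show ?thesis using yC by (simp add: D_iff y_def)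
  qed
  have step2: "lc f (delta c x) \<in> D" for f
  proof -
    define y where "y = lc f (delta c x)"
    have yC: "y \<in> Cset" unfolding y_def by (rule lc_Cset[OF dC])
    have y': "y = rc (delta (cop c) x) f" unfolding y_def lc_def delta_cop ..
    have axc: "cax (cop c)" by (rule cax_cop[OF ax])
    have "delta c y \<in> ssum (tens Cset (B \<inter> Cset)) (tens (A \<inter> Cset) Cset)"
    proof (rule CORE_L[OF lC lC lB lA subset_refl subset_refl CA fs_CC[OF delta_Cset[OF ax yC]]], intro allI impI)
      fix g assume pg: "perp g A"
      have "lc g (delta c y) = rc (delta (cop c) (rc (delta (cop c) x) f)) g"
        unfolding lc_def delta_cop[symmetric] y' ..
      also have "\<dots> = rc (delta (cop c) x) (cv (cop c) g f)" by (rule ID_R[OF axc xC])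
      also have "\<dots> = lc (cv (cop c) g f) (delta c x)" unfolding lc_def delta_cop ..
      finally have e: "lc g (delta c y) = lc (cv (cop c) g f) (delta c x)" .
      have "perp (cv (cop c) g f) A" unfolding perp_def
      proof
        fix a assume a: "a \<in> A"
        have aC: "a \<in> Cset" using a CA by blast
        have "lc f (delta c a) \<in> A" by (rule lc_tens[OF subcoalg_d[OF sA a] lA CA lA])
        then have "pr g (rc (delta (cop c) a) f) = 0" using pg by (simp add: perp_def lc_def delta_cop)
        then show "pr (cv (cop c) g f) a = 0" using LINCV[OF axc aC] by simp
      qed
      then show "lc g (delta c y) \<in> B" using e lc_D[OF xD] by simp
    qed
    then have "delta c y \<in> ssum (tens A Cset) (tens Cset B)" using CA CB by (simp add: Int_absorb2 ssum_comm)
    then show ?thesis using yC by (simp add: D_iff y_def)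
  qed
  have "delta c x \<in> ssum (tens (D \<inter> Cset) Cset) (tens Cset ({zerov} \<inter> Cset))"
    by (rule CORE[OF lC lC lD ls_zero_set subset_refl subset_refl _ fs_CC[OF dC]])
      (use step1 ls_zero[OF lC] in auto)
  then have t1: "delta c x \<in> tens D Cset"
    unfolding zero_Int[OF lC] tens_zero_r ssum_zero[OF ls_tens] Int_absorb2[OF CD] .
  have "delta c x \<in> ssum (tens D (D \<inter> Cset)) (tens ({zerov} \<inter> D) Cset)"
    by (rule CORE_L[OF lD lC lD ls_zero_set CD subset_refl _ t1])
      (use step2 ls_zero[OF lC] in auto)
  then show ?thesis
    unfolding zero_Int[OF lD] tens_zero_l ssum_zero[OF ls_tens] Int_absorb2[OF CD] .
qed


lemma part_a:
  assumes sS: "simple_subcoalg c S" and SD: "S \<subseteq> D"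
  shows "S \<subseteq> A \<or> S \<subseteq> B"
proof (rule ccontr)
  assume nab: "\<not> (S \<subseteq> A \<or> S \<subseteq> B)"
  have s: "subcoalg c S" and nz: "S \<noteq> {zerov}" using sS by (auto simp: simple_subcoalg_def)
  have lS: "lin_subspace S" and CS: "S \<subseteq> Cset" using s by (auto simp: subcoalg_def)
  have SA: "S \<inter> A = {zerov}" using simple_dich[OF sS sA] nab by blast
  have SB: "S \<inter> B = {zerov}" using simple_dich[OF sS sB] nab by blast
  obtain x where x: "x \<in> S" "x \<noteq> zerov" using nz ls_zero[OF lS] by blast
  have xD: "x \<in> D" using x SD by blast
  have xC: "x \<in> Cset" using x CS by blast
  have "delta c x \<in> ssum (tens (A \<inter> S) S) (tens S (B \<inter> S))"
    by (rule CORE[OF lS lS lA lB CS CS CB subcoalg_d[OF s x(1)]]) (use rc_D[OF xD] in blast)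
  moreover have "A \<inter> S = {zerov}" "B \<inter> S = {zerov}" using SA SB by blast+
  ultimately have "delta c x \<in> ssum {zerov} {zerov}" by (simp add: tens_zero_l tens_zero_r)
  then have "delta c x = zerov" using ssum_zero[OF ls_zero_set] by blast
  then have "x = zerov" using counit_R[OF cu xC] by simp
  then show False using x by simp
qed

lemma simple_props:
  assumes "simple_subcoalg c S"
  shows "subcoalg c S" "lin_subspace S" "S \<subseteq> Cset"
  using assms by (auto simp: simple_subcoalg_def subcoalg_def)

lemma case2:
  assumes sS: "simple_subcoalg c S" and SD: "S \<subseteq> D" and sT: "simple_subcoalg c T" and TD: "T \<subseteq> D"
    and SA: "S \<subseteq> A" and TB: "T \<subseteq> B"
  shows "wedge c D S T = wedge c Cset S T"
proof
  have lS: "lin_subspace S" and CS: "S \<subseteq> Cset" and lT: "lin_subspace T" and CT: "T \<subseteq> Cset"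
    using simple_props[OF sS] simple_props[OF sT] by auto
  show "wedge c D S T \<subseteq> wedge c Cset S T"
  proof
    fix x assume "x \<in> wedge c D S T"
    then have x: "x \<in> D" "delta c x \<in> ssum (tens S D) (tens D T)" by (auto simp: wedge_def)
    have "ssum (tens S D) (tens D T) \<subseteq> ssum (tens S Cset) (tens Cset T)"
      by (intro ssum_mono tens_mono CD subset_refl)
    then show "x \<in> wedge c Cset S T" using x CD by (auto simp: wedge_def)
  qed
  show "wedge c Cset S T \<subseteq> wedge c D S T"
  proof
    fix x assume "x \<in> wedge c Cset S T"
    then have x: "x \<in> Cset" "delta c x \<in> ssum (tens S Cset) (tens Cset T)" by (auto simp: wedge_def)
    have "ssum (tens S Cset) (tens Cset T) \<subseteq> ssum (tens A Cset) (tens Cset B)"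
      by (intro ssum_mono tens_mono SA TB subset_refl)
    then have xD: "x \<in> D" using x by (auto simp: D_iff)
    have "delta c x \<in> ssum (tens (S \<inter> D) D) (tens D (T \<inter> D))"
    proof (rule CORE[OF lD lD lS lT CD CD CT SUB[OF xD]], intro allI impI)
      fix p assume "perp p T"
      then show "rc (delta c x) p \<in> S" using rc_ssum[OF x(2) lS CS subset_refl subset_refl CT _ lC] by blast
    qed
    moreover have "S \<inter> D = S" "T \<inter> D = T" using SD TD by blast+
    ultimately show "x \<in> wedge c D S T" using xD by (simp add: wedge_def)
  qed
qed

lemma case3:
  assumes sS: "simple_subcoalg c S" and SD: "S \<subseteq> D" and sT: "simple_subcoalg c T" and TD: "T \<subseteq> D"
    and SA: "S \<subseteq> A" and TB: "\<not> T \<subseteq> B"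
  shows "wedge c D S T = wedge c A S T"
proof
  have lS: "lin_subspace S" and CS: "S \<subseteq> Cset" and lT: "lin_subspace T" and CT: "T \<subseteq> Cset"
    using simple_props[OF sS] simple_props[OF sT] by auto
  have TA: "T \<subseteq> A" using part_a[OF sT TD] TB by blast
  have TB0: "T \<inter> B = {zerov}" using simple_dich[OF sT sB] TB by blast
  show "wedge c A S T \<subseteq> wedge c D S T"
  proof
    fix x assume "x \<in> wedge c A S T"
    then have x: "x \<in> A" "delta c x \<in> ssum (tens S A) (tens A T)" by (auto simp: wedge_def)
    have "ssum (tens S A) (tens A T) \<subseteq> ssum (tens S D) (tens D T)"
      by (intro ssum_mono tens_mono A_D subset_refl)
    then show "x \<in> wedge c D S T" using x A_D by (auto simp: wedge_def)
  qed
  show "wedge c D S T \<subseteq> wedge c A S T"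
  proof
    fix x assume "x \<in> wedge c D S T"
    then have xD: "x \<in> D" and x2: "delta c x \<in> ssum (tens S D) (tens D T)" by (auto simp: wedge_def)
    have xC: "x \<in> Cset" using xD CD by blast
    have "delta c x \<in> ssum (tens D ({zerov} \<inter> D)) (tens (A \<inter> D) D)"
    proof (rule CORE_L[OF lD lD ls_zero_set lA CD CD CA SUB[OF xD]], intro allI impI)
      fix f assume pf: "perp f A"
      have "perp f S" using pf SA by (auto simp: perp_def)
      then have "lc f (delta c x) \<in> T" using lc_ssum[OF x2 lT CS CD CD CT _ lS lD lD] by blast
      moreover have "lc f (delta c x) \<in> B" using lc_D[OF xD pf] .
      ultimately show "lc f (delta c x) \<in> {zerov}" using TB0 by blast
    qed
    moreover have "A \<inter> D = A" using A_D by blast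
    ultimately have "delta c x \<in> tens A D"
      by (simp add: zero_Int[OF lD] tens_zero_r ssum_zero2[OF ls_tens])
    then have xA: "x \<in> A" using rc_tens[OF _ lA CD, of "delta c x" u] counit_R[OF cu xC] by simp
    have "delta c x \<in> ssum (tens (S \<inter> A) A) (tens A (T \<inter> A))"
    proof (rule CORE[OF lA lA lS lT CA CA CT subcoalg_d[OF sA xA]], intro allI impI)
      fix p assume "perp p T"
      then show "rc (delta c x) p \<in> S" using rc_ssum[OF x2 lS CS CD CD CT _ lD] by blast
    qed
    moreover have "S \<inter> A = S" "T \<inter> A = T" using SA TA by blast+
    ultimately show "x \<in> wedge c A S T" using xA by (simp add: wedge_def)
  qed
qed

lemma case4:
  assumes sS: "simple_subcoalg c S" and SD: "S \<subseteq> D" and sT: "simple_subcoalg c T" and TD: "T \<subseteq> D"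
    and SA: "\<not> S \<subseteq> A" and TB: "T \<subseteq> B"
  shows "wedge c D S T = wedge c B S T"
proof
  have lS: "lin_subspace S" and CS: "S \<subseteq> Cset" and lT: "lin_subspace T" and CT: "T \<subseteq> Cset"
    using simple_props[OF sS] simple_props[OF sT] by auto
  have SB: "S \<subseteq> B" using part_a[OF sS SD] SA by blast
  have SA0: "S \<inter> A = {zerov}" using simple_dich[OF sS sA] SA by blast
  show "wedge c B S T \<subseteq> wedge c D S T"
  proof
    fix x assume "x \<in> wedge c B S T"
    then have x: "x \<in> B" "delta c x \<in> ssum (tens S B) (tens B T)" by (auto simp: wedge_def)
    have "ssum (tens S B) (tens B T) \<subseteq> ssum (tens S D) (tens D T)"
      by (intro ssum_mono tens_mono B_D subset_refl)
    then show "x \<in> wedge c D S T" using x B_D by (auto simp: wedge_def)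
  qed
  show "wedge c D S T \<subseteq> wedge c B S T"
  proof
    fix x assume "x \<in> wedge c D S T"
    then have xD: "x \<in> D" and x2: "delta c x \<in> ssum (tens S D) (tens D T)" by (auto simp: wedge_def)
    have xC: "x \<in> Cset" using xD CD by blast
    have "delta c x \<in> ssum (tens ({zerov} \<inter> D) D) (tens D (B \<inter> D))"
    proof (rule CORE[OF lD lD ls_zero_set lB CD CD CB SUB[OF xD]], intro allI impI)
      fix p assume pp: "perp p B"
      have "perp p T" using pp TB by (auto simp: perp_def)
      then have "rc (delta c x) p \<in> S" using rc_ssum[OF x2 lS CS CD CD CT _ lD] by blast
      moreover have "rc (delta c x) p \<in> A" using rc_D[OF xD pp] .
      ultimately show "rc (delta c x) p \<in> {zerov}" using SA0 by blast
    qed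
    moreover have "B \<inter> D = B" using B_D by blast
    ultimately have "delta c x \<in> tens D B"
      by (simp add: zero_Int[OF lD] tens_zero_l ssum_zero2[OF ls_tens])
    then have xB: "x \<in> B" using lc_tens[OF _ lB CD lD, of "delta c x" u] counit_L[OF cu xC] by simp
    have "delta c x \<in> ssum (tens (S \<inter> B) B) (tens B (T \<inter> B))"
    proof (rule CORE[OF lB lB lS lT CB CB CT subcoalg_d[OF sB xB]], intro allI impI)
      fix p assume "perp p T"
      then show "rc (delta c x) p \<in> S" using rc_ssum[OF x2 lS CS CD CD CT _ lD] by blast
    qed
    moreover have "S \<inter> B = S" "T \<inter> B = T" using SB TB by blast+
    ultimately show "x \<in> wedge c B S T" using xB by (simp add: wedge_def)
  qed
qed


lemma case1:
  assumes sS: "simple_subcoalg c S" and SD: "S \<subseteq> D" and sT: "simple_subcoalg c T" and TD: "T \<subseteq> D"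
    and SA: "\<not> S \<subseteq> A" and TB: "\<not> T \<subseteq> B"
  shows "wedge c D S T = ssum S T \<and> S \<inter> T = {zerov}"
proof -
  have ssS: "subcoalg c S" and lS: "lin_subspace S" and CS: "S \<subseteq> Cset"
    and ssT: "subcoalg c T" and lT: "lin_subspace T" and CT: "T \<subseteq> Cset"
    using simple_props[OF sS] simple_props[OF sT] by auto
  have SB: "S \<subseteq> B" using part_a[OF sS SD] SA by blast
  have TA: "T \<subseteq> A" using part_a[OF sT TD] TB by blast
  have SA0: "S \<inter> A = {zerov}" using simple_dich[OF sS sA] SA by blast
  have TB0: "T \<inter> B = {zerov}" using simple_dich[OF sT sB] TB by blast
  have ST: "S \<inter> T = {zerov}" using SA0 TA ls_zero[OF lS] ls_zero[OF lT] by blast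
  have sub1: "ssum S T \<subseteq> wedge c D S T"
  proof
    fix z assume "z \<in> ssum S T"
    then obtain s t where st: "s \<in> S" "t \<in> T" "z = (\<lambda>i. s i + t i)" by (rule ssumE)
    have zD: "z \<in> D" using st SD TD ls_add[OF lD] by blast
    have dz: "delta c z = (\<lambda>q. delta c s q + delta c t q)"
      unfolding st(3) by (rule delta_add) (use st CS CT in auto)
    have "delta c s \<in> tens S D" using subcoalg_d[OF ssS st(1)] tens_mono[OF subset_refl SD] by blast
    moreover have "delta c t \<in> tens D T" using subcoalg_d[OF ssT st(2)] tens_mono[OF TD subset_refl] by blast
    ultimately have "delta c z \<in> ssum (tens S D) (tens D T)" unfolding dz by (rule ssumI)
    then show "z \<in> wedge c D S T" using zD by (simp add: wedge_def)
  qed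
  have sub2: "wedge c D S T \<subseteq> ssum S T"
  proof
    fix x assume "x \<in> wedge c D S T"
    then have xD: "x \<in> D" and x2: "delta c x \<in> ssum (tens S D) (tens D T)" by (auto simp: wedge_def)
    have xC: "x \<in> Cset" using xD CD by blast
    have dC: "delta c x \<in> Cset" by (rule delta_Cset[OF ax xC])
    have tD: "delta c x \<in> tens D D" by (rule SUB[OF xD])
    have lSA: "lin_subspace (ssum S A)" by (rule ls_ssum[OF lS lA])
    have "delta c x \<in> ssum (tens (ssum S A \<inter> D) D) (tens D (T \<inter> B \<inter> D))"
    proof (rule CORE2[OF lD lD lS lT lA lB CD CD CT CB tD])
      show "\<forall>p. perp p T \<longrightarrow> rc (delta c x) p \<in> S"
        using rc_ssum[OF x2 lS CS CD CD CT _ lD] by blast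
      show "\<forall>p. perp p B \<longrightarrow> rc (delta c x) p \<in> A" using rc_D[OF xD] by blast
    qed
    moreover have "T \<inter> B \<inter> D = {zerov}" using TB0 ls_zero[OF lD] by blast
    ultimately have t1: "delta c x \<in> tens (ssum S A \<inter> D) D"
      by (simp add: tens_zero_r ssum_zero[OF ls_tens])
    have rcSA: "rc (delta c x) g \<in> ssum S A" for g
      using rc_tens[OF t1 ls_Int[OF lSA lD] CD] by blast
    have i: "\<forall>f. perp f A \<longrightarrow> lc f (delta c x) \<in> S"
    proof (intro allI impI)
      fix f assume pf: "perp f A"
      define y where "y = lc f (delta c x)"
      have yC: "y \<in> Cset" unfolding y_def by (rule lc_Cset[OF dC])
      have rcy: "rc (delta c y) g \<in> S" for g
      proof -
        obtain s a where sa: "s \<in> S" "a \<in> A" "rc (delta c x) g = (\<lambda>i. s i + a i)"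
          using rcSA[of g] by (rule ssumE)
        have sC: "s \<in> Cset" and aC: "a \<in> Cset" using sa CS CA by auto
        have "rc (delta c y) g = lc f (delta c (rc (delta c x) g))" unfolding y_def by (rule ID_M[OF ax xC])
        also have "\<dots> = lc f (\<lambda>q. delta c s q + delta c a q)"
          unfolding sa(3) by (simp add: delta_add[OF sC aC])
        also have "\<dots> = (\<lambda>j. lc f (delta c s) j + lc f (delta c a) j)"
          by (rule lc_add[OF delta_Cset[OF ax sC] delta_Cset[OF ax aC]])
        also have "\<dots> = lc f (delta c s)"
          using lc_tens_perp[OF subcoalg_d[OF sA sa(2)] CA pf lA lA] by simp
        also have "\<dots> \<in> S" by (rule lc_tens[OF subcoalg_d[OF ssS sa(1)] lS CS lS])
        finally show ?thesis .
      qed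
      have "delta c y \<in> ssum (tens (S \<inter> Cset) Cset) (tens Cset ({zerov} \<inter> Cset))"
        by (rule CORE[OF lC lC lS ls_zero_set subset_refl subset_refl _ fs_CC[OF delta_Cset[OF ax yC]]])
          (use rcy ls_zero[OF lC] in auto)
      then have "delta c y \<in> tens S Cset"
        unfolding zero_Int[OF lC] tens_zero_r ssum_zero[OF ls_tens] Int_absorb2[OF CS] .
      then have "rc (delta c y) u \<in> S" by (rule rc_tens[OF _ lS subset_refl])
      then show "lc f (delta c x) \<in> S" using counit_R[OF cu yC] by (simp add: y_def)
    qed
    have ii: "\<forall>f. perp f S \<longrightarrow> lc f (delta c x) \<in> T"
      using lc_ssum[OF x2 lT CS CD CD CT _ lS lD lD] by blast
    have "delta c x \<in> ssum (tens D (ssum S T \<inter> D)) (tens (A \<inter> S \<inter> D) D)"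
      by (rule CORE2_L[OF lD lD lS lA lT lS CD CD CA CS tD i ii])
    moreover have "A \<inter> S \<inter> D = {zerov}" using SA0 ls_zero[OF lD] by blast
    ultimately have "delta c x \<in> tens D (ssum S T \<inter> D)"
      by (simp add: tens_zero_l ssum_zero[OF ls_tens])
    then have "lc u (delta c x) \<in> ssum S T \<inter> D"
      by (rule lc_tens[OF _ ls_Int[OF ls_ssum[OF lS lT] lD] CD lD])
    then show "x \<in> ssum S T" using counit_L[OF cu xC] by simp
  qed
  show ?thesis using sub1 sub2 ST by blast
qed
end

theorem mainTheorem7:
  fixes c :: "'b \<Rightarrow> 'b \<Rightarrow> 'b \<Rightarrow> 'k::field" and u :: "'b \<Rightarrow> 'k"
    and A B :: "('b \<Rightarrow> 'k) set"
  assumes "coalg c u" and "basic c"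
    and "subcoalg c A" and "subcoalg c B"
  shows "(\<forall>S. simple_subcoalg c S \<and> S \<subseteq> wedge c Cset A B \<longrightarrow> S \<subseteq> A \<or> S \<subseteq> B)
    \<and> (\<forall>S T. simple_subcoalg c S \<and> S \<subseteq> wedge c Cset A B
          \<and> simple_subcoalg c T \<and> T \<subseteq> wedge c Cset A B \<longrightarrow>
       (\<not> S \<subseteq> A \<and> \<not> T \<subseteq> B \<longrightarrow>
          wedge c (wedge c Cset A B) S T = ssum S T \<and> S \<inter> T = {zerov}) \<and>
       (S \<subseteq> A \<and> T \<subseteq> B \<longrightarrow>
          wedge c (wedge c Cset A B) S T = wedge c Cset S T) \<and>
       (S \<subseteq> A \<and> \<not> T \<subseteq> B \<longrightarrow>
          wedge c (wedge c Cset A B) S T = wedge c A S T) \<and>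
       (\<not> S \<subseteq> A \<and> T \<subseteq> B \<longrightarrow>
          wedge c (wedge c Cset A B) S T = wedge c B S T))"
proof -
  have PA: "\<forall>S. simple_subcoalg c S \<and> S \<subseteq> wedge c Cset A B \<longrightarrow> S \<subseteq> A \<or> S \<subseteq> B"
    using part_a[OF assms(1,3,4)] by blast
  have PB: "\<forall>S T. simple_subcoalg c S \<and> S \<subseteq> wedge c Cset A B
          \<and> simple_subcoalg c T \<and> T \<subseteq> wedge c Cset A B \<longrightarrow>
       (\<not> S \<subseteq> A \<and> \<not> T \<subseteq> B \<longrightarrow>
          wedge c (wedge c Cset A B) S T = ssum S T \<and> S \<inter> T = {zerov}) \<and>
       (S \<subseteq> A \<and> T \<subseteq> B \<longrightarrow>
          wedge c (wedge c Cset A B) S T = wedge c Cset S T) \<and>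
       (S \<subseteq> A \<and> \<not> T \<subseteq> B \<longrightarrow>
          wedge c (wedge c Cset A B) S T = wedge c A S T) \<and>
       (\<not> S \<subseteq> A \<and> T \<subseteq> B \<longrightarrow>
          wedge c (wedge c Cset A B) S T = wedge c B S T)"
  proof (intro allI impI)
    fix S T
    assume h: "simple_subcoalg c S \<and> S \<subseteq> wedge c Cset A B \<and> simple_subcoalg c T \<and> T \<subseteq> wedge c Cset A B"
    then have sS: "simple_subcoalg c S" and SD: "S \<subseteq> wedge c Cset A B"
      and sT: "simple_subcoalg c T" and TD: "T \<subseteq> wedge c Cset A B" by auto
    note c1 = case1[OF assms(1,3,4) sS SD sT TD]
    note c2 = case2[OF assms(1,3,4) sS SD sT TD]
    note c3 = case3[OF assms(1,3,4) sS SD sT TD]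
    note c4 = case4[OF assms(1,3,4) sS SD sT TD]
    show "(\<not> S \<subseteq> A \<and> \<not> T \<subseteq> B \<longrightarrow>
          wedge c (wedge c Cset A B) S T = ssum S T \<and> S \<inter> T = {zerov}) \<and>
       (S \<subseteq> A \<and> T \<subseteq> B \<longrightarrow>
          wedge c (wedge c Cset A B) S T = wedge c Cset S T) \<and>
       (S \<subseteq> A \<and> \<not> T \<subseteq> B \<longrightarrow>
          wedge c (wedge c Cset A B) S T = wedge c A S T) \<and>
       (\<not> S \<subseteq> A \<and> T \<subseteq> B \<longrightarrow>
          wedge c (wedge c Cset A B) S T = wedge c B S T)"
      using c1 c2 c3 c4 by blast
  qed
  show ?thesis using PA PB by (rule conjI)
qed


end
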